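(* Let $X$ and $\Theta$ be compact metric spaces, $\tau:\Theta\times X\to X$, $(\theta,x)\mapsto\tau_\theta(x)$, continuous, $\Omega=X\times\Theta$, $T:\Omega\to X$ the first-coordinate projection, and $\mathcal{H}$ the set of holonomic Borel probability measures on $\Omega$, i.e. those $\hat\nu$ with $\int_\Omega [f(\tau_\theta(x))-f(x)]\,d\hat\nu(x,\theta)=0$ for all $f\in C(X,\mathbb{R})$; for $\hat\nu\in\mathcal{H}$ let $\Phi(\hat\nu)=\nu=T_*\hat\nu$. Fix a Borel probability $\mu$ on $\Theta$. For positive continuous $\psi:X\to\mathbb{R}$ define $dq_x(\theta)=\psi(\tau_\theta(x))\,d\mu(\theta)$, $B_q(g)(x)=\int_\Theta g(\tau_\theta(x))\,dq_x(\theta)$, $P(\psi)=\sup_{\hat\nu\in\mathcal{H}}\inf_{g\in C(X,\mathbb{R}),g>0}\int_X\ln\frac{B_q(g)}{g}\,d\nu$, and let $h_v(\hat\nu)=\inf_{g\in C(X,\mathbb{R}),g>0}\int_X\ln\frac{B_\mu(g)}{g}\,d\nu$ with $B_\mu(g)(x)=\int_\Theta g(\tau_\theta(x))\,d\mu(\theta)$. An equilibrium state for $\psi$ is $\hat\nu\in\mathcal{H}$ with $h_v(\hat\nu)+\int_X\log\psi\,d\nu=P(\psi)$. Define $p:C(X,\mathbb{R})\to\mathbb{R}$ by $p(\varphi)=P(\exp(\varphi))$. Let $\psi:X\to\mathbb{R}$ be positive and continuous. If $p$ is Gâteaux differentiable at $\varphi=\log\psi$, then \[ \#\{\Phi(\hat\mu):\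 \hat\mu \text{ is an equilibrium state for } \psi\}=1. \] *)

theory Defs
  imports "HOL-Probability.Probability"
begin

text \<open>Omega = X \<times> Theta is modelled as the product type 'a \<times> 'b; X and Theta are the
  whole (compact) metric types 'a and 'b.\<close>

definition holonomic :: "('b::topological_space \<Rightarrow> 'a::topological_space \<Rightarrow> 'a) \<Rightarrow> ('a \<times> 'b) measure \<Rightarrow> bool" where
  "holonomic \<tau> N \<longleftrightarrow> prob_space N \<and> sets N = sets borel \<and>
     (\<forall>f::'a \<Rightarrow> real. continuous_on UNIV f \<longrightarrow>
        (\<integral>\<omega>. f (\<tau> (snd \<omega>) (fst \<omega>)) - f (fst \<omega>) \<partial>N) = 0)"

definition Phi :: "('a::topological_space \<times> 'b::topological_space) measure \<Rightarrow> 'a measure" where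
  "Phi N = distr N borel fst"

text \<open>B_q(g)(x) = \<integral> g(\<tau>_\<theta> x) \<psi>(\<tau>_\<theta> x) d\<mu>(\<theta>); with \<psi> = 1 this is B_\<mu>.\<close>
definition Bop :: "'b measure \<Rightarrow> ('b \<Rightarrow> 'a \<Rightarrow> 'a) \<Rightarrow> ('a \<Rightarrow> real) \<Rightarrow> ('a \<Rightarrow> real) \<Rightarrow> 'a \<Rightarrow> real" where
  "Bop \<mu> \<tau> \<psi> g x = (\<integral>\<theta>. g (\<tau> \<theta> x) * \<psi> (\<tau> \<theta> x) \<partial>\<mu>)"

definition infB :: "'b::topological_space measure \<Rightarrow> ('b \<Rightarrow> 'a \<Rightarrow> 'a) \<Rightarrow> ('a \<Rightarrow> real) \<Rightarrow> ('a::topological_space \<times> 'b) measure \<Rightarrow> ereal" where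
  "infB \<mu> \<tau> \<psi> N = (INF g \<in> {g :: 'a \<Rightarrow> real. continuous_on UNIV g \<and> (\<forall>x. g x > 0)}.
       ereal (\<integral>x. ln (Bop \<mu> \<tau> \<psi> g x / g x) \<partial>(Phi N)))"

definition entropy_v :: "'b::topological_space measure \<Rightarrow> ('b \<Rightarrow> 'a \<Rightarrow> 'a) \<Rightarrow> ('a::topological_space \<times> 'b) measure \<Rightarrow> ereal" where
  "entropy_v \<mu> \<tau> N = infB \<mu> \<tau> (\<lambda>_. 1) N"

definition pressure :: "'b::topological_space measure \<Rightarrow> ('b \<Rightarrow> 'a::topological_space \<Rightarrow> 'a) \<Rightarrow> ('a \<Rightarrow> real) \<Rightarrow> ereal" where
  "pressure \<mu> \<tau> \<psi> = (SUP N \<in> {N. holonomic \<tau> N}. infB \<mu> \<tau> \<psi> N)"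

definition equilibrium_state :: "'b::topological_space measure \<Rightarrow> ('b \<Rightarrow> 'a::topological_space \<Rightarrow> 'a) \<Rightarrow> ('a \<Rightarrow> real) \<Rightarrow> ('a \<times> 'b) measure \<Rightarrow> bool" where
  "equilibrium_state \<mu> \<tau> \<psi> N \<longleftrightarrow> holonomic \<tau> N \<and>
     entropy_v \<mu> \<tau> N + ereal (\<integral>x. ln (\<psi> x) \<partial>(Phi N)) = pressure \<mu> \<tau> \<psi>"

definition gateaux_differentiable_C :: "(('a::topological_space \<Rightarrow> real) \<Rightarrow> real) \<Rightarrow> ('a \<Rightarrow> real) \<Rightarrow> bool" where
  "gateaux_differentiable_C p \<phi> \<longleftrightarrow> (\<exists>L :: ('a \<Rightarrow> real) \<Rightarrow> real.
     (\<forall>f g. continuous_on UNIV f \<longrightarrow> continuous_on UNIV g \<longrightarrow> L (\<lambda>x. f x + g x) = L f + L g) \<and>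
     (\<forall>c f. continuous_on UNIV f \<longrightarrow> L (\<lambda>x. c * f x) = c * L f) \<and>
     (\<exists>K. \<forall>f. continuous_on UNIV f \<longrightarrow> \<bar>L f\<bar> \<le> K * (SUP x. \<bar>f x\<bar>)) \<and>
     (\<forall>h. continuous_on UNIV h \<longrightarrow>
        ((\<lambda>t. (p (\<lambda>x. \<phi> x + t * h x) - p \<phi>) / t) \<longlongrightarrow> L h) (at 0)))"

end

theory Submission
  imports Defs
begin

lemma cont_bounded:
  fixes f :: "'c::metric_space \<Rightarrow> real"
  assumes "compact (UNIV::'c set)" "continuous_on UNIV f"
  shows "\<exists>B. \<forall>x. \<bar>f x\<bar> \<le> B"
proof -
  have "compact (f ` UNIV)" using assms compact_continuous_image by blast
  then obtain B where "\<forall>y\<in>f ` UNIV. norm y \<le> B" using compact_imp_bounded bounded_iff by metis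
  then show ?thesis by auto
qed

lemma cont_meas:
  assumes "continuous_on UNIV f" "sets M = sets borel"
  shows "f \<in> M \<rightarrow>\<^sub>M borel"
  using borel_measurable_continuous_onI[OF assms(1)] measurable_cong_sets[OF assms(2) refl] by blast

lemma cont_integrable:
  fixes f :: "'c::metric_space \<Rightarrow> real"
  assumes "compact (UNIV::'c set)" "continuous_on UNIV f" "finite_measure M" "sets M = sets borel"
  shows "integrable M f"
proof -
  obtain B where "\<forall>x. \<bar>f x\<bar> \<le> B" using cont_bounded assms by blast
  then show ?thesis using finite_measure.integrable_const_bound[OF assms(3), of f B] cont_meas[OF assms(2,4)] by auto
qed

lemma closed_approx:
  fixes F :: "'c::metric_space set"
  assumes "closed F" "F \<noteq> {}"
  defines "g \<equiv> \<lambda>j x. max 0 (1 - real j * infdist x F)"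
  shows "continuous_on UNIV (g j)" and "\<bar>g j x\<bar> \<le> 1" and "(\<lambda>j. g j x) \<longlonglongrightarrow> indicator F x"
proof -
  show "continuous_on UNIV (g j)" unfolding g_def by (intro continuous_intros)
  show "\<bar>g j x\<bar> \<le> 1" unfolding g_def using infdist_nonneg[of x F] by auto
  show "(\<lambda>j. g j x) \<longlonglongrightarrow> indicator F x"
  proof (cases "x \<in> F")
    case True then show ?thesis by (simp add: g_def infdist_zero)
  next
    case False
    then have d: "infdist x F > 0" using in_closed_iff_infdist_zero[OF assms(1,2)] infdist_nonneg[of x F] by auto
    obtain N :: nat where N: "1 / infdist x F < N" using reals_Archimedean2 by blast
    have "eventually (\<lambda>j. g j x = indicator F x) sequentially"
      unfolding eventually_sequentially
    proof (intro exI allI impI)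
      fix j assume "N \<le> j"
      then have "1 / infdist x F < real j" using N by linarith
      then have "1 < real j * infdist x F" using d by (simp add: field_simps)
      then show "g j x = indicator F x" using False by (simp add: g_def)
    qed
    then show ?thesis by (simp add: tendsto_eventually)
  qed
qed

lemma closed_integral_lim:
  fixes F :: "'c::metric_space set"
  assumes "closed F" "F \<noteq> {}" "finite_measure M" "sets M = sets borel"
  shows "(\<lambda>j. \<integral>x. max 0 (1 - real j * infdist x F) \<partial>M) \<longlonglongrightarrow> measure M F"
proof -
  interpret finite_measure M by fact
  have FM: "F \<in> sets M" using assms(1,4) by simp
  have "(\<lambda>j. \<integral>x. max 0 (1 - real j * infdist x F) \<partial>M) \<longlonglongrightarrow> (\<integral>x. indicator F x \<partial>M)"
  proof (rule integral_dominated_convergence[where w="\<lambda>_. 1"])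
    show "indicator F \<in> borel_measurable M" using FM by simp
    show "(\<lambda>x. max 0 (1 - real i * infdist x F)) \<in> borel_measurable M" for i
      using cont_meas[OF closed_approx(1)[OF assms(1,2)] assms(4)] by simp
    show "integrable M (\<lambda>_. 1::real)" by simp
    show "AE x in M. (\<lambda>i. max 0 (1 - real i * infdist x F)) \<longlonglongrightarrow> indicator F x"
      by (rule AE_I2) (rule closed_approx(3)[OF assms(1,2)])
    show "AE x in M. norm (max 0 (1 - real i * infdist x F)) \<le> 1" for i
      by (rule AE_I2) (use closed_approx(2)[OF assms(1,2)] in simp)
  qed
  then show ?thesis using FM by simp
qed

lemma measure_eq_cont:
  fixes M1 M2 :: "'c::metric_space measure"
  assumes fin: "finite_measure M1" "finite_measure M2"
    and sets: "sets M1 = sets borel" "sets M2 = sets borel"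
    and eq: "\<And>f. continuous_on UNIV f \<Longrightarrow> (\<integral>x. f x \<partial>M1) = (\<integral>x. (f x::real) \<partial>M2)"
  shows "M1 = M2"
proof -
  have closed_eq: "emeasure M1 F = emeasure M2 F" if "closed F" for F
  proof (cases "F = {}")
    case True then show ?thesis by simp
  next
    case False
    have "measure M1 F = measure M2 F"
      using closed_integral_lim[OF that False fin(1) sets(1)] closed_integral_lim[OF that False fin(2) sets(2)]
        eq[OF closed_approx(1)[OF that False]] LIMSEQ_unique by auto
    then show ?thesis using fin that sets
      by (simp add: finite_measure.emeasure_eq_measure)
  qed
  have sb: "sets (borel::'c measure) = sigma_sets UNIV (Collect closed)"
    by (subst borel_eq_closed) simp
  show ?thesis
  proof (rule measure_eqI_generator_eq[where E="Collect closed" and \<Omega>=UNIV and A="\<lambda>_. UNIV"])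
    show "Int_stable (Collect closed)" by (auto simp: Int_stable_def)
    show "Collect closed \<subseteq> Pow UNIV" by simp
    show "\<And>X. X \<in> Collect closed \<Longrightarrow> emeasure M1 X = emeasure M2 X" using closed_eq by simp
    show "sets M1 = sigma_sets UNIV (Collect closed)" using sets(1) sb by simp
    show "sets M2 = sigma_sets UNIV (Collect closed)" using sets(2) sb by simp
    show "range (\<lambda>_. UNIV) \<subseteq> Collect closed" by simp
    show "\<Union> (range (\<lambda>_. UNIV)) = UNIV" by simp
    show "emeasure M1 UNIV \<noteq> \<infinity>" for i :: nat
      using finite_measure.emeasure_finite[OF fin(1)] by simp
  qed
qed

lemma finite_net:
  assumes "compact (UNIV::'c::metric_space set)" "e > 0"
  shows "\<exists>P::'c set. finite P \<and> P \<noteq> {} \<and> (\<forall>x. \<exists>p\<in>P. dist x p < e)"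
proof -
  have cov: "(UNIV::'c set) \<subseteq> (\<Union>x\<in>UNIV. ball x e)"
  proof
    fix y :: 'c
    have "y \<in> ball y e" using assms by simp
    then show "y \<in> (\<Union>x\<in>UNIV. ball x e)" by blast
  qed
  obtain P where P: "finite P" "(UNIV::'c set) \<subseteq> (\<Union>x\<in>P. ball x e)"
  proof (rule compactE_image[OF assms(1), of "UNIV::'c set" "\<lambda>x. ball x e"])
    show "\<And>T. T \<in> UNIV \<Longrightarrow> open (ball T e)" by simp
    show "(UNIV::'c set) \<subseteq> \<Union> ((\<lambda>x. ball x e) ` UNIV)" using cov .
  qed (rule that)
  have A: "\<forall>x. \<exists>p\<in>P. dist x p < e"
  proof
    fix x :: 'c
    have "x \<in> (\<Union>x\<in>P. ball x e)" using P(2) by (rule subsetD) simp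
    then obtain p where "p \<in> P" "x \<in> ball p e" by (rule UN_E)
    then show "\<exists>p\<in>P. dist x p < e" by (metis mem_ball dist_commute)
  qed
  obtain p where "p \<in> P" using A[rule_format, of undefined] by (rule bexE)
  then have "P \<noteq> {}" by auto
  show ?thesis by (rule exI[where x=P]) (simp add: P(1) \<open>P \<noteq> {}\<close> A)
qed

lemma countable_dense:
  assumes "compact (UNIV::'c::metric_space set)"
  shows "\<exists>D::'c set. countable D \<and> (\<forall>x e. e > 0 \<longrightarrow> (\<exists>p\<in>D. dist x p < e))"
proof -
  have "\<forall>n::nat. \<exists>P::'c set. finite P \<and> P \<noteq> {} \<and> (\<forall>x. \<exists>p\<in>P. dist x p < 1 / Suc n)"
    by (intro allI finite_net[OF assms]) simp
  then obtain P :: "nat \<Rightarrow> 'c set" where P: "\<And>n. finite (P n) \<and> (\<forall>x. \<exists>p\<in>P n. dist x p < 1 / Suc n)" by metis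
  show ?thesis
  proof (intro exI conjI allI impI)
    show "countable (\<Union>(range P))" using P by (simp add: countable_finite)
    fix x and e :: real assume "e > 0"
    then obtain n where "1 / Suc n < e" using nat_approx_posE by blast
    moreover obtain p where "p \<in> P n" "dist x p < 1 / Suc n" using P[of n] by blast
    ultimately show "\<exists>p\<in>\<Union>(range P). dist x p < e" by (intro bexI[where x=p]) auto
  qed
qed

lemma dist_pair_le: "dist (a, b) (c, d) \<le> dist a c + dist b d"
  unfolding dist_Pair_Pair by (rule sqrt_sum_squares_le_sum) auto

lemma rect_cover:
  fixes D1 :: "'a::metric_space set" and D2 :: "'b::metric_space set"
  assumes D1: "\<And>x e. e > 0 \<Longrightarrow> \<exists>p\<in>D1. dist x p < e"
    and D2: "\<And>x e. e > 0 \<Longrightarrow> \<exists>p\<in>D2. dist x p < e"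
    and U: "open U" and z: "(x, y) \<in> U"
  shows "\<exists>p q n. p \<in> D1 \<and> q \<in> D2 \<and> (x, y) \<in> ball p (1 / Suc n) \<times> ball q (1 / Suc n) \<and>
     ball p (1 / Suc n) \<times> ball q (1 / Suc n) \<subseteq> U"
proof -
  obtain e where e: "e > 0" "ball (x, y) e \<subseteq> U" using U z open_contains_ball by blast
  obtain n :: nat where n: "1 / Suc n < e / 4" using nat_approx_posE[of "e/4"] e(1) by auto
  have pos: "(0::real) < 1 / Suc n" by simp
  obtain p where p: "p \<in> D1" "dist x p < 1 / Suc n" using D1[OF pos] by blast
  obtain q where q: "q \<in> D2" "dist y q < 1 / Suc n" using D2[OF pos] by blast
  have sub: "ball p (1 / Suc n) \<times> ball q (1 / Suc n) \<subseteq> U"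
  proof
    fix w assume w: "w \<in> ball p (1 / Suc n) \<times> ball q (1 / Suc n)"
    obtain a b where wab: "w = (a, b)" by (cases w)
    have a: "dist p a < 1 / Suc n" and b: "dist q b < 1 / Suc n" using w wab by auto
    have "dist x a < 2 / Suc n" using p(2) a dist_triangle[of x a p] by simp
    moreover have "dist y b < 2 / Suc n" using q(2) b dist_triangle[of y b q] by simp
    ultimately have "dist (x, y) (a, b) < e" using dist_pair_le[of x y a b] n by linarith
    then show "w \<in> U" using e(2) wab by auto
  qed
  moreover have "(x, y) \<in> ball p (1 / Suc n) \<times> ball q (1 / Suc n)" using p q by (simp add: dist_commute)
  ultimately show ?thesis using p(1) q(1) by blast
qed

lemma borel_pair_eq:
  assumes ca: "compact (UNIV::'a::metric_space set)" and cb: "compact (UNIV::'b::metric_space set)"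
  shows "sets (borel \<Otimes>\<^sub>M borel) = sets (borel :: ('a \<times> 'b) measure)"
proof (rule antisym)
  have fm: "fst \<in> (borel :: ('a \<times> 'b) measure) \<rightarrow>\<^sub>M borel" by (intro borel_measurable_continuous_onI continuous_intros)
  have sm: "snd \<in> (borel :: ('a \<times> 'b) measure) \<rightarrow>\<^sub>M borel" by (intro borel_measurable_continuous_onI continuous_intros)
  show "sets (borel \<Otimes>\<^sub>M borel) \<subseteq> sets (borel :: ('a \<times> 'b) measure)"
    unfolding sets_pair_measure
  proof (rule sets.sigma_sets_subset')
    show "space (borel::'a measure) \<times> space (borel::'b measure) \<in> sets (borel :: ('a \<times> 'b) measure)" by simp
    show "{a \<times> b |a b. a \<in> sets (borel::'a measure) \<and> b \<in> sets (borel::'b measure)} \<subseteq> sets (borel :: ('a \<times> 'b) measure)"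
    proof
      fix r assume "r \<in> {a \<times> b |a b. a \<in> sets (borel::'a measure) \<and> b \<in> sets (borel::'b measure)}"
      then obtain a b where r: "r = a \<times> b" "a \<in> sets (borel::'a measure)" "b \<in> sets (borel::'b measure)" by blast
      have "fst -` a \<in> sets (borel :: ('a \<times> 'b) measure)" using measurable_sets[OF fm r(2)] by simp
      moreover have "snd -` b \<in> sets (borel :: ('a \<times> 'b) measure)" using measurable_sets[OF sm r(3)] by simp
      moreover have "a \<times> b = fst -` a \<inter> snd -` b" by auto
      ultimately show "r \<in> sets (borel :: ('a \<times> 'b) measure)" using r(1) by simp
    qed
  qed
  obtain D1 :: "'a set" where D1: "countable D1" "\<And>x e. e > 0 \<Longrightarrow> \<exists>p\<in>D1. dist x p < e"
    using countable_dense[OF ca] by blast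
  obtain D2 :: "'b set" where D2: "countable D2" "\<And>x e. e > 0 \<Longrightarrow> \<exists>p\<in>D2. dist x p < e"
    using countable_dense[OF cb] by blast
  have op: "U \<in> sets (borel \<Otimes>\<^sub>M borel)" if "open U" for U :: "('a \<times> 'b) set"
  proof -
    define f where "f = (\<lambda>(p::'a, q::'b, n::nat). ball p (1 / Suc n) \<times> ball q (1 / Suc n))"
    define S where "S = {(p, q, n). p \<in> D1 \<and> q \<in> D2 \<and> f (p, q, n) \<subseteq> U}"
    have "S \<subseteq> D1 \<times> D2 \<times> UNIV" unfolding S_def by auto
    moreover have "countable (D1 \<times> D2 \<times> (UNIV::nat set))" using D1(1) D2(1) by simp
    ultimately have cR: "countable (f ` S)" using countable_subset by blast
    have RS: "f ` S \<subseteq> sets (borel \<Otimes>\<^sub>M borel)" unfolding f_def by auto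
    have "U = \<Union>(f ` S)"
    proof
      show "\<Union>(f ` S) \<subseteq> U" unfolding S_def by auto
      show "U \<subseteq> \<Union>(f ` S)"
      proof
        fix z assume "z \<in> U"
        obtain x y where z: "z = (x, y)" by (cases z)
        obtain p q n where "p \<in> D1" "q \<in> D2" "(x, y) \<in> f (p, q, n)" "f (p, q, n) \<subseteq> U"
          using rect_cover[OF D1(2) D2(2) \<open>open U\<close>, of x y] \<open>z \<in> U\<close> z unfolding f_def by auto
        then show "z \<in> \<Union>(f ` S)" unfolding S_def using z by blast
      qed
    qed
    then show ?thesis using cR RS by (metis sets.countable_Union)
  qed
  show "sets (borel :: ('a \<times> 'b) measure) \<subseteq> sets (borel \<Otimes>\<^sub>M borel)"
    unfolding sets_borel
  proof (rule sets.sigma_sets_subset')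
    show "Collect open \<subseteq> sets (borel \<Otimes>\<^sub>M borel :: ('a \<times> 'b) measure)" using op by auto
    have "(UNIV :: ('a \<times> 'b) set) = space (borel \<Otimes>\<^sub>M borel)" by (simp add: space_pair_measure)
    then show "(UNIV :: ('a \<times> 'b) set) \<in> sets (borel \<Otimes>\<^sub>M borel)" by (metis sets.top)
  qed
qed


lemma net_enum:
  assumes "compact (UNIV::'c::metric_space set)"
  shows "\<exists>(e::nat \<Rightarrow> nat \<Rightarrow> 'c) m. \<forall>k. m k > 0 \<and> (\<forall>x. \<exists>i<m k. dist x (e k i) < 1 / Suc k)"
proof -
  have "\<forall>k. \<exists>xs::'c list. xs \<noteq> [] \<and> (\<forall>x. \<exists>i<length xs. dist x (xs ! i) < 1 / Suc k)"
  proof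
    fix k :: nat
    obtain P :: "'c set" where P: "finite P" "P \<noteq> {}" "\<forall>x. \<exists>p\<in>P. dist x p < 1 / Suc k"
      using finite_net[OF assms, of "1 / Suc k"] by auto
    obtain xs where xs: "set xs = P" using finite_list[OF P(1)] by blast
    have "\<forall>x. \<exists>i<length xs. dist x (xs ! i) < 1 / Suc k"
    proof
      fix x obtain p where "p \<in> P" "dist x p < 1 / Suc k" using P(3) by blast
      then show "\<exists>i<length xs. dist x (xs ! i) < 1 / Suc k" using xs by (metis in_set_conv_nth)
    qed
    moreover have "xs \<noteq> []" using xs P(2) by auto
    ultimately show "\<exists>xs::'c list. xs \<noteq> [] \<and> (\<forall>x. \<exists>i<length xs. dist x (xs ! i) < 1 / Suc k)" by blast
  qed
  then obtain L :: "nat \<Rightarrow> 'c list" where L: "\<And>k. L k \<noteq> [] \<and> (\<forall>x. \<exists>i<length (L k). dist x (L k ! i) < 1 / Suc k)"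
    by metis
  show ?thesis
    by (rule exI[where x="\<lambda>k i. L k ! i"], rule exI[where x="\<lambda>k. length (L k)"]) (use L in auto)
qed

locale cantor_setup =
  fixes e :: "nat \<Rightarrow> nat \<Rightarrow> 'c::metric_space" and m :: "nat \<Rightarrow> nat"
  assumes cpt: "compact (UNIV::'c set)"
    and mpos: "\<And>k. m k > 0"
    and cover: "\<And>k x. \<exists>i<m k. dist x (e k i) < 1 / Suc k"
begin

definition r :: "nat \<Rightarrow> real" where "r k = 1 / Suc k"
definition w :: "nat \<Rightarrow> real" where "w k = 1 / (\<Prod>j\<le>k. 3 * real (m j))"
definition digits :: "(nat \<Rightarrow> nat) \<Rightarrow> bool" where "digits a \<longleftrightarrow> (\<forall>k. a k < m k)"
definition gam :: "(nat \<Rightarrow> nat) \<Rightarrow> real" where "gam a = (\<Sum>k. real (a k) * w k)"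
definition good :: "(nat \<Rightarrow> nat) \<Rightarrow> bool" where
  "good a \<longleftrightarrow> digits a \<and> (\<exists>x. \<forall>k. dist x (e k (a k)) \<le> r k)"
definition AA :: "(nat \<Rightarrow> nat) set" where "AA = {a. good a}"
definition pt :: "(nat \<Rightarrow> nat) \<Rightarrow> 'c" where "pt a = (THE x. \<forall>k. dist x (e k (a k)) \<le> r k)"
definition CC :: "real set" where "CC = gam ` AA"
definition addr :: "'c \<Rightarrow> nat \<Rightarrow> nat" where "addr x = (\<lambda>k. LEAST i. dist x (e k i) < r k)"
definition sig :: "'c \<Rightarrow> real" where "sig x = gam (addr x)"
definition ss :: "real \<Rightarrow> 'c" where "ss y = (if y \<in> CC then pt (inv_into AA gam y) else e 0 0)"

lemma r_pos: "r k > 0" by (simp add: r_def)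

lemma w_pos: "w k > 0"
  unfolding w_def using mpos by (intro divide_pos_pos prod_pos) auto

lemma w_Suc: "w (Suc k) = w k / (3 * real (m (Suc k)))"
  unfolding w_def by (simp add: prod.atMost_Suc)

lemma w_Suc_le: "w (Suc k) \<le> w k / 3"
proof -
  have "real (m (Suc k)) \<ge> 1" using mpos[of "Suc k"] by linarith
  then have "3 * real (m (Suc k)) \<ge> 3" by simp
  then show ?thesis unfolding w_Suc using w_pos[of k] by (intro divide_left_mono) auto
qed

lemma w_le: "w (k + i) \<le> w k / 3 ^ i"
proof (induction i)
  case 0 then show ?case by simp
next
  case (Suc i)
  have "w (k + Suc i) \<le> w (k + i) / 3" using w_Suc_le[of "k + i"] by simp
  also have "\<dots> \<le> (w k / 3 ^ i) / 3" using Suc by (intro divide_right_mono) auto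
  finally show ?case by simp
qed

lemma w_mono: "j \<le> k \<Longrightarrow> w k \<le> w j"
proof -
  assume "j \<le> k"
  then obtain i where "k = j + i" using le_Suc_ex by blast
  then have "w k \<le> w j / 3 ^ i" using w_le by simp
  also have "\<dots> \<le> w j" using w_pos[of j] by (simp add: divide_le_eq)
  finally show ?thesis .
qed

lemma w0: "w 0 \<le> 1 / 3"
proof -
  have "real (m 0) \<ge> 1" using mpos[of 0] by linarith
  then show ?thesis unfolding w_def by (simp add: field_simps)
qed

lemma w_small: "w k \<le> 1 / 3 ^ k"
proof -
  have "w k \<le> w 0 / 3 ^ k" using w_le[of 0 k] by simp
  also have "\<dots> \<le> 1 / 3 ^ k" using w0 by (intro divide_right_mono) auto
  finally show ?thesis .
qed

lemma digit_term: "digits a \<Longrightarrow> real (a (Suc j)) * w (Suc j) \<le> w j / 3"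
proof -
  assume "digits a"
  then have a: "a (Suc j) < m (Suc j)" by (simp add: digits_def)
  have "real (a (Suc j)) * w (Suc j) \<le> real (m (Suc j)) * w (Suc j)"
    using a w_pos[of "Suc j"] by (intro mult_right_mono) auto
  also have "\<dots> = w j / 3" unfolding w_Suc using mpos[of "Suc j"] by (simp add: field_simps)
  finally show ?thesis .
qed

lemma digit_term0: "digits a \<Longrightarrow> real (a j) * w j \<le> 1 / 3 ^ j"
proof (cases j)
  case 0
  assume "digits a"
  then have a: "a 0 < m 0" by (simp add: digits_def)
  have "real (a 0) * w 0 \<le> real (m 0) * w 0" using a w_pos[of 0] by (intro mult_right_mono) auto
  also have "\<dots> = 1 / 3" unfolding w_def using mpos[of 0] by simp
  finally show ?thesis using 0 by simp
next
  case (Suc i)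
  assume d: "digits a"
  have "real (a j) * w j \<le> w i / 3" using digit_term[OF d, of i] Suc by simp
  also have "\<dots> \<le> (1 / 3 ^ i) / 3" using w_small[of i] by (intro divide_right_mono) auto
  also have "\<dots> \<le> 1 / 3 ^ j" using Suc by simp
  finally show ?thesis .
qed

lemma summable_gam: "digits a \<Longrightarrow> summable (\<lambda>k. real (a k) * w k)"
proof (rule summable_comparison_test)
  assume d: "digits a"
  show "\<exists>N. \<forall>n\<ge>N. norm (real (a n) * w n) \<le> (1/3) ^ n"
  proof (intro exI[where x=0] allI impI)
    fix n :: nat
    have "0 \<le> real (a n) * w n" using w_pos[of n] by simp
    then show "norm (real (a n) * w n) \<le> (1/3) ^ n" using digit_term0[OF d, of n] by (simp add: power_one_over)
  qed
  show "summable (\<lambda>n. (1/3::real) ^ n)" by (rule summable_geometric) simp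
qed

lemma tail_bound:
  assumes d: "digits a"
  shows "(\<Sum>i. real (a (i + Suc k)) * w (i + Suc k)) \<le> w k / 2"
    and "0 \<le> (\<Sum>i. real (a (i + Suc k)) * w (i + Suc k))"
proof -
  have t: "real (a (i + Suc k)) * w (i + Suc k) \<le> (w k / 3) * (1/3) ^ i" for i
  proof -
    have "real (a (i + Suc k)) * w (i + Suc k) \<le> w (k + i) / 3"
      using digit_term[OF d, of "k + i"] by (simp add: add.commute)
    also have "\<dots> \<le> (w k / 3 ^ i) / 3" using w_le[of k i] by (intro divide_right_mono) auto
    also have "\<dots> = (w k / 3) * (1/3) ^ i" by (simp add: power_one_over)
    finally show ?thesis .
  qed
  have sg: "summable (\<lambda>i. (w k / 3) * (1/3::real) ^ i)"
    by (intro summable_mult summable_geometric) simp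
  have ss: "summable (\<lambda>i. real (a (i + Suc k)) * w (i + Suc k))"
    using summable_gam[OF d] by (rule summable_ignore_initial_segment)
  have "(\<Sum>i. real (a (i + Suc k)) * w (i + Suc k)) \<le> (\<Sum>i. (w k / 3) * (1/3::real) ^ i)"
    by (rule suminf_le[OF t ss sg])
  also have "\<dots> = (w k / 3) * (\<Sum>i. (1/3::real) ^ i)"
    by (rule suminf_mult) (rule summable_geometric, simp)
  also have "\<dots> = w k / 2" by (simp add: suminf_geometric)
  finally show "(\<Sum>i. real (a (i + Suc k)) * w (i + Suc k)) \<le> w k / 2" .
  show "0 \<le> (\<Sum>i. real (a (i + Suc k)) * w (i + Suc k))"
    using ss by (intro suminf_nonneg) (simp_all add: less_imp_le[OF w_pos])
qed

lemma gam_split: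
  assumes d: "digits a"
  shows "gam a = (\<Sum>i. real (a (i + Suc k)) * w (i + Suc k)) + (\<Sum>j<k. real (a j) * w j) + real (a k) * w k"
  unfolding gam_def using suminf_split_initial_segment[OF summable_gam[OF d], of "Suc k"] by simp

lemma gam_close:
  assumes "digits a" "digits b" "\<And>j. j \<le> k \<Longrightarrow> a j = b j"
  shows "\<bar>gam a - gam b\<bar> \<le> w k / 2"
proof -
  have "(\<Sum>j<k. real (a j) * w j) = (\<Sum>j<k. real (b j) * w j)" using assms(3) by (intro sum.cong) auto
  moreover have "real (a k) * w k = real (b k) * w k" using assms(3) by simp
  ultimately show ?thesis
    using gam_split[OF assms(1), of k] gam_split[OF assms(2), of k] tail_bound[OF assms(1), of k] tail_bound[OF assms(2), of k]
    by linarith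
qed

lemma gam_sep:
  assumes "digits a" "digits b" "\<And>j. j < k \<Longrightarrow> a j = b j" "a k \<noteq> b k"
  shows "\<bar>gam a - gam b\<bar> \<ge> w k / 2"
proof -
  have s: "(\<Sum>j<k. real (a j) * w j) = (\<Sum>j<k. real (b j) * w j)" using assms(3) by (intro sum.cong) auto
  have "\<bar>real (a k) - real (b k)\<bar> \<ge> 1" using assms(4) by linarith
  then have "\<bar>real (a k) - real (b k)\<bar> * w k \<ge> w k" using w_pos[of k] by simp
  then have "\<bar>real (a k) * w k - real (b k) * w k\<bar> \<ge> w k" by (simp add: left_diff_distrib[symmetric] abs_mult w_pos less_imp_le)
  then show ?thesis
    using gam_split[OF assms(1), of k] gam_split[OF assms(2), of k] tail_bound[OF assms(1), of k] tail_bound[OF assms(2), of k] s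
    by linarith
qed

lemma gam_agree:
  assumes "digits a" "digits b" "\<bar>gam a - gam b\<bar> < w k / 2"
  shows "\<And>j. j \<le> k \<Longrightarrow> a j = b j"
proof (rule ccontr)
  fix j assume j: "j \<le> k" "a j \<noteq> b j"
  define i where "i = (LEAST i. a i \<noteq> b i)"
  have i: "a i \<noteq> b i" unfolding i_def using j(2) by (rule LeastI)
  have ij: "i \<le> j" unfolding i_def using j(2) by (rule Least_le)
  have "\<And>l. l < i \<Longrightarrow> a l = b l" unfolding i_def using not_less_Least by blast
  then have "\<bar>gam a - gam b\<bar> \<ge> w i / 2" using gam_sep[OF assms(1,2)] i by blast
  moreover have "w k \<le> w i" using ij j(1) by (intro w_mono) simp
  ultimately show False using assms(3) by linarith
qed

lemma gam_inj: "inj_on gam AA"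
proof (rule inj_onI)
  fix a b assume ab: "a \<in> AA" "b \<in> AA" "gam a = gam b"
  then have d: "digits a" "digits b" by (auto simp: AA_def good_def)
  show "a = b"
  proof
    fix k show "a k = b k" using gam_agree[OF d, of k k] ab(3) w_pos[of k] by simp
  qed
qed

lemma unique_pt:
  assumes "\<And>k. dist x (e k (a k)) \<le> r k" "\<And>k. dist y (e k (a k)) \<le> r k"
  shows "x = y"
proof (rule ccontr)
  assume "x \<noteq> y"
  then have "dist x y > 0" by simp
  then obtain k :: nat where k: "1 / Suc k < dist x y / 2" using nat_approx_posE[of "dist x y / 2"] by auto
  have "dist x y \<le> dist x (e k (a k)) + dist y (e k (a k))" by (rule dist_triangle2)
  also have "\<dots> \<le> 2 * r k" using assms[of k] by simp
  finally show False using k by (simp add: r_def)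
qed

lemma pt_prop: "good a \<Longrightarrow> dist (pt a) (e k (a k)) \<le> r k"
proof -
  assume "good a"
  then obtain x where x: "\<forall>k. dist x (e k (a k)) \<le> r k" by (auto simp: good_def)
  have "pt a = x" unfolding pt_def
    by (rule the_equality) (use x unique_pt in blast)+
  then show ?thesis using x by simp
qed

lemma pt_eq: "(\<And>k. dist x (e k (a k)) \<le> r k) \<Longrightarrow> pt a = x"
  unfolding pt_def by (rule the_equality) (use unique_pt in blast)+

lemma addr_prop: "addr x k < m k \<and> dist x (e k (addr x k)) < r k"
proof -
  obtain i where i: "i < m k" "dist x (e k i) < r k" using cover[of k x] by (auto simp: r_def)
  have "dist x (e k (addr x k)) < r k" unfolding addr_def using i(2) by (rule LeastI)
  moreover have "addr x k \<le> i" unfolding addr_def using i(2) by (rule Least_le)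
  ultimately show ?thesis using i(1) by simp
qed

lemma addr_good: "good (addr x)" and pt_addr: "pt (addr x) = x"
proof -
  show "good (addr x)" unfolding good_def digits_def using addr_prop[of x]
    by (auto intro!: exI[where x=x] less_imp_le)
  show "pt (addr x) = x" by (rule pt_eq) (use addr_prop[of x] in \<open>simp add: less_imp_le\<close>)
qed

lemma sig_in: "sig x \<in> CC"
  unfolding sig_def CC_def AA_def using addr_good by blast

lemma ss_sig: "ss (sig x) = x"
proof -
  have "inv_into AA gam (sig x) = addr x"
    unfolding sig_def using gam_inj addr_good by (intro inv_into_f_f) (auto simp: AA_def)
  then show ?thesis using sig_in pt_addr by (simp add: ss_def)
qed

lemma CC_bounded: "CC \<subseteq> {0..2}"
proof
  fix y assume "y \<in> CC"
  then obtain a where a: "good a" "y = gam a" by (auto simp: CC_def AA_def)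
  then have d: "digits a" by (simp add: good_def)
  have s3: "summable (\<lambda>k. (1/3::real) ^ k)" by (rule summable_geometric) simp
  have "gam a \<le> (\<Sum>k. (1/3::real) ^ k)" unfolding gam_def
    using digit_term0[OF d] summable_gam[OF d] s3
    by (intro suminf_le) (auto simp: power_one_over)
  also have "\<dots> = 3 / 2" by (simp add: suminf_geometric)
  finally have "gam a \<le> 2" by simp
  moreover have "0 \<le> gam a" unfolding gam_def using summable_gam[OF d]
    by (intro suminf_nonneg) (simp_all add: less_imp_le[OF w_pos])
  ultimately show "y \<in> {0..2}" using a by simp
qed

lemma w_lim:
  fixes eps :: real assumes epos: "eps > 0" shows "\<exists>k. w k < eps"
proof -
  obtain k :: nat where k: "1 / Suc k < eps" using nat_approx_posE[OF epos] by auto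
  have "(3::real) ^ k \<ge> Suc k"
  proof (induction k)
    case 0 then show ?case by simp
  next
    case (Suc k) then show ?case by simp
  qed
  then have "1 / (3::real) ^ k \<le> 1 / Suc k" by (intro divide_left_mono) auto
  then have "w k < eps" using w_small[of k] k by linarith
  then show ?thesis by blast
qed

lemma good_digits: "a \<in> AA \<Longrightarrow> digits a" by (simp add: AA_def good_def)

lemma CC_closed: "closed CC"
  unfolding closed_sequential_limits
proof (intro allI impI, elim conjE)
  fix y :: "nat \<Rightarrow> real" and l assume yC: "\<forall>n. y n \<in> CC" and lim: "y \<longlonglongrightarrow> l"
  define a where "a n = inv_into AA gam (y n)" for n
  have aA: "a n \<in> AA" for n using yC unfolding a_def CC_def by (auto intro: inv_into_into)
  have ay: "gam (a n) = y n" for n using yC[rule_format, of n] unfolding a_def CC_def by (simp add: f_inv_into_f)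
  have ad: "digits (a n)" for n using aA good_digits by blast
  have cau: "Cauchy y" using lim by (rule LIMSEQ_imp_Cauchy)
  have "\<forall>k. \<exists>N. \<forall>n\<ge>N. \<forall>n'\<ge>N. dist (y n) (y n') < w k / 2"
  proof
    fix k
    have "w k / 2 > 0" using w_pos[of k] by simp
    from metric_CauchyD[OF cau this] show "\<exists>N. \<forall>n\<ge>N. \<forall>n'\<ge>N. dist (y n) (y n') < w k / 2" .
  qed
  then obtain N where N: "\<And>k n n'. n \<ge> N k \<Longrightarrow> n' \<ge> N k \<Longrightarrow> dist (y n) (y n') < w k / 2" by metis
  have agree: "\<And>k n n' j. n \<ge> N k \<Longrightarrow> n' \<ge> N k \<Longrightarrow> j \<le> k \<Longrightarrow> a n j = a n' j"
  proof -
    fix k n n' j assume "n \<ge> N k" "n' \<ge> N k" "j \<le> k"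
    then show "a n j = a n' j"
      using gam_agree[OF ad ad, of n n' k j] N[of k n n'] ay by (simp add: dist_real_def)
  qed
  define b where "b j = a (N j) j" for j
  define M where "M k = (\<Sum>j\<le>k. N j)" for k
  have NM: "N j \<le> M k" if "j \<le> k" for j k
    unfolding M_def using that by (intro member_le_sum) auto
  have ab: "a n j = b j" if "n \<ge> M k" "j \<le> k" for n j k
    unfolding b_def using agree[of j n "N j" j] NM[OF that(2)] that(1) by simp
  have bd: "digits b" using ad unfolding b_def digits_def by simp
  have conv: "y \<longlonglongrightarrow> gam b"
  proof (rule LIMSEQ_I)
    fix r :: real assume "r > 0"
    then obtain k where k: "w k < r" using w_lim by blast
    show "\<exists>no. \<forall>n\<ge>no. norm (y n - gam b) < r"
    proof (intro exI allI impI)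
      fix n assume "n \<ge> M k"
      then have "\<bar>gam (a n) - gam b\<bar> \<le> w k / 2" using gam_close[OF ad bd] ab by blast
      then show "norm (y n - gam b) < r" using ay[of n] k w_pos[of k] by simp
    qed
  qed
  then have lb: "l = gam b" using lim LIMSEQ_unique by blast
  have "good b"
  proof -
    have sc: "seq_compact (UNIV::'c set)" using cpt by (rule compact_imp_seq_compact)
    obtain x phi where phi: "strict_mono phi" "((\<lambda>n. pt (a n)) \<circ> phi) \<longlonglongrightarrow> x"
      using sc unfolding seq_compact_def by blast
    have "dist x (e j (b j)) \<le> r j" for j
    proof (rule LIMSEQ_le_const2)
      show "(\<lambda>n. dist (((\<lambda>n. pt (a n)) \<circ> phi) n) (e j (b j))) \<longlonglongrightarrow> dist x (e j (b j))"
        by (intro tendsto_dist phi(2) tendsto_const)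
      show "\<exists>N. \<forall>n\<ge>N. dist (((\<lambda>n. pt (a n)) \<circ> phi) n) (e j (b j)) \<le> r j"
      proof (intro exI allI impI)
        fix n assume "n \<ge> M j"
        then have "phi n \<ge> M j" using seq_suble[OF phi(1), of n] by linarith
        then have "a (phi n) j = b j" using ab by blast
        then show "dist (((\<lambda>n. pt (a n)) \<circ> phi) n) (e j (b j)) \<le> r j"
          using pt_prop[of "a (phi n)" j] aA[of "phi n"] by (simp add: AA_def)
      qed
    qed
    then show ?thesis using bd unfolding good_def by blast
  qed
  then show "l \<in> CC" unfolding CC_def AA_def using lb by blast
qed

lemma ss_cont: "continuous_on CC ss"
  unfolding continuous_on_iff
proof (intro ballI allI impI)
  fix y eps assume y: "y \<in> CC" and eps: "(eps::real) > 0"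
  obtain k :: nat where k: "1 / Suc k < eps / 2" using nat_approx_posE[of "eps/2"] eps by auto
  show "\<exists>d>0. \<forall>y'\<in>CC. dist y' y < d \<longrightarrow> dist (ss y') (ss y) < eps"
  proof (intro exI[where x="w k / 2"] conjI ballI impI)
    show "w k / 2 > 0" using w_pos by simp
    fix y' assume y': "y' \<in> CC" "dist y' y < w k / 2"
    define a where "a = inv_into AA gam y" define a' where "a' = inv_into AA gam y'"
    have aA: "a \<in> AA" "a' \<in> AA" using y y' unfolding a_def a'_def CC_def by (auto intro: inv_into_into)
    have ay: "gam a = y" "gam a' = y'" using y y'(1) unfolding a_def a'_def CC_def by (simp_all add: f_inv_into_f)
    have "a' k = a k" using gam_agree[OF good_digits[OF aA(2)] good_digits[OF aA(1)], of k k] y'(2) ay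
      by (simp add: dist_real_def)
    then have "dist (pt a') (pt a) \<le> dist (pt a') (e k (a k)) + dist (pt a) (e k (a k))"
      by (metis dist_triangle2)
    also have "\<dots> \<le> 2 * r k" using pt_prop[of a' k] pt_prop[of a k] aA \<open>a' k = a k\<close> by (simp add: AA_def)
    finally have "dist (pt a') (pt a) < eps" using k by (simp add: r_def)
    then show "dist (ss y') (ss y) < eps" using y y' by (simp add: ss_def a_def a'_def)
  qed
qed

lemma sig_meas: "sig \<in> borel_measurable borel"
proof -
  have "(\<lambda>x. real (addr x k) * w k) \<in> borel_measurable borel" for k
  proof -
    have dm[measurable]: "(\<lambda>x. dist x (e k i)) \<in> borel_measurable borel" for i
      by (intro borel_measurable_continuous_onI continuous_intros)
    have "(\<lambda>x. addr x k) \<in> borel \<rightarrow>\<^sub>M count_space UNIV"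
      unfolding addr_def by measurable
    moreover have "(\<lambda>n. real n * w k) \<in> count_space UNIV \<rightarrow>\<^sub>M (borel :: real measure)" by simp
    ultimately show ?thesis by (rule measurable_compose[where f="\<lambda>x. addr x k"])
  qed
  then have "(\<lambda>x. \<Sum>k. real (addr x k) * w k) \<in> borel_measurable borel" by (rule borel_measurable_suminf)
  then show ?thesis unfolding sig_def gam_def .
qed

lemma ss_meas: "ss \<in> borel \<rightarrow>\<^sub>M borel"
proof -
  have "(\<lambda>y. if y \<in> CC then pt (inv_into AA gam y) else e 0 0) \<in> borel \<rightarrow>\<^sub>M borel"
  proof (rule borel_measurable_continuous_on_if)
    show "CC \<in> sets borel" using CC_closed by simp
    show "continuous_on CC (\<lambda>y. pt (inv_into AA gam y))"
      using ss_cont by (rule continuous_on_eq) (simp add: ss_def)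
    show "continuous_on (- CC) (\<lambda>y. e 0 0)" by simp
  qed
  then show ?thesis unfolding ss_def .
qed

end

lemma cantor_surj:
  assumes "compact (UNIV::'c::metric_space set)"
  shows "\<exists>(C::real set) (s::real \<Rightarrow> 'c) sg. closed C \<and> C \<subseteq> {0..2} \<and> sg \<in> borel_measurable borel \<and>
    s \<in> borel \<rightarrow>\<^sub>M borel \<and> continuous_on C s \<and> (\<forall>x. sg x \<in> C) \<and> (\<forall>x. s (sg x) = x)"
proof -
  obtain e :: "nat \<Rightarrow> nat \<Rightarrow> 'c" and m where em: "\<forall>k. m k > 0 \<and> (\<forall>x. \<exists>i<m k. dist x (e k i) < 1 / Suc k)"
    using net_enum[OF assms] by blast
  interpret cantor_setup e m using assms em by unfold_locales auto
  show ?thesis using CC_closed CC_bounded sig_meas ss_meas ss_cont sig_in ss_sig by blast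
qed


lemma weak_compact:
  fixes M :: "nat \<Rightarrow> 'c::metric_space measure"
  assumes cpt: "compact (UNIV::'c set)" and Mp: "\<And>n. prob_space (M n)" and Ms: "\<And>n. sets (M n) = sets borel"
  shows "\<exists>r N. strict_mono r \<and> prob_space N \<and> sets N = sets borel \<and>
    (\<forall>F::'c \<Rightarrow> real. continuous_on UNIV F \<longrightarrow> (\<lambda>n. \<integral>x. F x \<partial>M (r n)) \<longlonglongrightarrow> (\<integral>x. F x \<partial>N))"
proof -
  obtain C :: "real set" and s :: "real \<Rightarrow> 'c" and sg where
    C: "closed C" "C \<subseteq> {0..2}" and sgm: "sg \<in> borel_measurable borel" and sm: "s \<in> borel \<rightarrow>\<^sub>M borel"
    and sc: "continuous_on C s" and sgC: "\<And>x. sg x \<in> C" and ssg: "\<And>x. s (sg x) = x"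
    using cantor_surj[OF cpt] by blast
  have sgM: "sg \<in> M n \<rightarrow>\<^sub>M borel" for n using sgm measurable_cong_sets[OF Ms refl] by blast
  define Mr where "Mr n = distr (M n) borel sg" for n
  have rd: "real_distribution (Mr n)" for n
    unfolding Mr_def real_distribution_def real_distribution_axioms_def
    using prob_space.prob_space_distr[OF Mp sgM] by simp
  have CB: "C \<in> sets borel" using C(1) by simp
  have tight: "tight Mr"
    unfolding tight_def
  proof (intro conjI allI impI)
    show "real_distribution (Mr n)" for n by (rule rd)
    fix eps :: real assume "eps > 0"
    show "\<exists>a b. a < b \<and> (\<forall>n. 1 - eps < measure (Mr n) {a<..b})"
    proof (rule exI[where x="-1::real"], rule exI[where x="2::real"], intro conjI allI)
      fix n
      have "sg -` {-1<..2} \<inter> space (M n) = space (M n)" using sgC C(2) by force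
      then have "measure (Mr n) {-1<..2} = 1" unfolding Mr_def
        using measure_distr[OF sgM, of "{-1<..2}" n] prob_space.prob_space[OF Mp] by simp
      then show "1 - eps < measure (Mr n) {-1<..2}" using \<open>eps > 0\<close> by simp
    qed simp
  qed
  obtain r N' where r: "strict_mono r" and N': "real_distribution N'" and wc: "weak_conv_m (Mr \<circ> id \<circ> r) N'"
    using tight_imp_convergent_subsubsequence[OF tight, of id] by (auto simp: strict_mono_def)
  interpret N': real_distribution N' by (rule N')
  have rd': "\<And>n. real_distribution ((Mr \<circ> id \<circ> r) n)" using rd by simp
  have conv: "(\<lambda>n. \<integral>y. G y \<partial>Mr (r n)) \<longlonglongrightarrow> (\<integral>y. G y \<partial>N')"
    if "continuous_on UNIV G" "\<And>y. norm (G y) \<le> B" for G :: "real \<Rightarrow> real" and B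
  proof -
    have "\<And>y. isCont G y" using that(1) continuous_on_eq_continuous_at[of UNIV G] by simp
    from weak_conv_imp_integral_bdd_continuous_conv[OF rd' N' wc this that(2)] show ?thesis by simp
  qed
  have Cne: "C \<noteq> {}" using sgC by blast
  have NC: "measure N' C = 1"
  proof -
    define g where "g j y = max 0 (1 - real j * infdist y C)" for j y
    have gi: "(\<integral>y. g j y \<partial>Mr n) = 1" for j n
    proof -
      have "(\<integral>y. g j y \<partial>Mr n) = (\<integral>x. g j (sg x) \<partial>M n)" unfolding Mr_def
        using closed_approx(1)[OF C(1) Cne, of j] by (intro integral_distr[OF sgM]) (simp add: g_def borel_measurable_continuous_onI)
      also have "\<dots> = (\<integral>x. 1 \<partial>M n)"
      proof -
        have "\<And>x. g j (sg x) = 1" using sgC by (simp add: g_def infdist_zero)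
        then show ?thesis by simp
      qed
      also have "\<dots> = 1" using prob_space.prob_space[OF Mp] by simp
      finally show ?thesis .
    qed
    have "(\<lambda>n. \<integral>y. g j y \<partial>Mr (r n)) \<longlonglongrightarrow> (\<integral>y. g j y \<partial>N')" for j
      using conv[of "g j" 1] closed_approx(1,2)[OF C(1) Cne, of j] by (simp add: g_def)
    then have "(\<integral>y. g j y \<partial>N') = 1" for j using gi LIMSEQ_unique[of "\<lambda>_. 1::real"] by simp
    moreover have "(\<lambda>j. \<integral>y. g j y \<partial>N') \<longlonglongrightarrow> measure N' C"
      unfolding g_def using closed_integral_lim[OF C(1) Cne, of N'] N'.finite_measure_axioms by simp
    ultimately show ?thesis using LIMSEQ_unique[of "\<lambda>_. 1::real"] by simp
  qed
  have AEC: "AE y in N'. y \<in> C" using N'.AE_in_set_eq_1[of C] NC CB by simp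
  define N where "N = distr N' borel s"
  have Np: "prob_space N" unfolding N_def by (rule N'.prob_space_distr) (simp add: sm)
  have Ns: "sets N = sets borel" unfolding N_def by simp
  have lim: "(\<lambda>n. \<integral>x. F x \<partial>M (r n)) \<longlonglongrightarrow> (\<integral>x. F x \<partial>N)" if Fc: "continuous_on UNIV F" for F :: "'c \<Rightarrow> real"
  proof -
    obtain B where B: "\<And>x. \<bar>F x\<bar> \<le> B" using cont_bounded[OF cpt Fc] by blast
    have B0: "0 \<le> B" using B[of undefined] by simp
    have Fm: "F \<in> borel_measurable borel" using Fc by (rule borel_measurable_continuous_onI)
    have c1: "continuous_on C (\<lambda>y. F (s y))" by (rule continuous_on_compose2[OF Fc sc]) simp
    have c2: "closedin (top_of_set UNIV) C" using closedin_closed_Int[OF C(1), of UNIV] by simp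
    have nb: "\<And>x. x \<in> C \<Longrightarrow> norm (F (s x)) \<le> B" using B by simp
    obtain G :: "real \<Rightarrow> real" where G: "continuous_on UNIV G" "\<And>y. y \<in> C \<Longrightarrow> G y = F (s y)"
      "\<And>y. y \<in> UNIV \<Longrightarrow> norm (G y) \<le> B"
      using Tietze[OF c1 c2 B0 nb] by blast
    have Gm: "G \<in> borel_measurable borel" using G(1) by (rule borel_measurable_continuous_onI)
    have eq1: "(\<integral>x. F x \<partial>M n) = (\<integral>y. G y \<partial>Mr n)" for n
    proof -
      have "(\<integral>y. G y \<partial>Mr n) = (\<integral>x. G (sg x) \<partial>M n)" unfolding Mr_def by (rule integral_distr[OF sgM Gm])
      also have "\<dots> = (\<integral>x. F x \<partial>M n)" using G(2)[OF sgC] ssg by simp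
      finally show ?thesis by simp
    qed
    have eq2: "(\<integral>y. G y \<partial>N') = (\<integral>x. F x \<partial>N)"
    proof -
      have m1: "G \<in> borel_measurable N'" using Gm measurable_cong_sets[OF N'.events_eq_borel refl] by blast
      have m2: "(\<lambda>y. F (s y)) \<in> borel_measurable N'"
        using measurable_compose[OF sm Fm] measurable_cong_sets[OF N'.events_eq_borel refl] by blast
      have ae: "AE y in N'. G y = F (s y)" using AEC by eventually_elim (simp add: G(2))
      have "(\<integral>y. G y \<partial>N') = (\<integral>y. F (s y) \<partial>N')" by (rule integral_cong_AE[OF m1 m2 ae])
      also have "\<dots> = (\<integral>x. F x \<partial>N)" unfolding N_def by (rule integral_distr[OF _ Fm, symmetric]) (simp add: sm)
      finally show ?thesis .
    qed
    show ?thesis using conv[OF G(1) G(3)] eq1 eq2 by simp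
  qed
  show ?thesis using r Np Ns lim by blast
qed


lemma ereal_le_add_iff: "(x::ereal) \<le> y + ereal c \<longleftrightarrow> x - ereal c \<le> y"
  by (cases x; cases y) auto

lemma INF_add_ereal_const: "(INF i\<in>I. f i + ereal c) = (INF i\<in>I. f i) + ereal c"
proof (rule antisym)
  show "(INF i\<in>I. f i) + ereal c \<le> (INF i\<in>I. f i + ereal c)"
    by (intro INF_greatest add_right_mono INF_lower)
  have "(INF i\<in>I. f i + ereal c) - ereal c \<le> (INF i\<in>I. f i)"
  proof (rule INF_greatest)
    fix i assume "i \<in> I"
    then have "(INF i\<in>I. f i + ereal c) \<le> f i + ereal c" by (rule INF_lower)
    then show "(INF i\<in>I. f i + ereal c) - ereal c \<le> f i" by (simp add: ereal_le_add_iff)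
  qed
  then show "(INF i\<in>I. f i + ereal c) \<le> (INF i\<in>I. f i) + ereal c" by (simp add: ereal_le_add_iff)
qed

definition posC :: "('a::topological_space \<Rightarrow> real) set" where
  "posC = {g. continuous_on UNIV g \<and> (\<forall>x. g x > 0)}"

lemma cont_pos_min:
  fixes h :: "'c::metric_space \<Rightarrow> real"
  assumes "compact (UNIV::'c set)" "continuous_on UNIV h" "\<And>x. h x > 0"
  shows "\<exists>c>0. \<forall>x. h x \<ge> c"
proof -
  have "compact (h ` UNIV)" by (rule compact_continuous_image[OF assms(2,1)])
  moreover have "h ` UNIV \<noteq> {}" by simp
  ultimately obtain c where "c \<in> h ` UNIV" "\<forall>t\<in>h ` UNIV. c \<le> t" using compact_attains_inf by blast
  then show ?thesis using assms(3) by force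
qed

lemma prob_integral_bound:
  fixes f :: "'c::metric_space \<Rightarrow> real"
  assumes "prob_space M" "\<And>x. \<bar>f x\<bar> \<le> B"
  shows "\<bar>\<integral>x. f x \<partial>M\<bar> \<le> B"
proof -
  interpret prob_space M by fact
  have "\<bar>\<integral>x. f x \<partial>M\<bar> \<le> (\<integral>x. \<bar>f x\<bar> \<partial>M)" by (rule integral_abs_bound)
  also have "\<dots> \<le> (\<integral>x. B \<partial>M)"
  proof (cases "integrable M (\<lambda>x. \<bar>f x\<bar>)")
    case True then show ?thesis using assms(2) by (intro integral_mono) auto
  next
    case False
    then have "(\<integral>x. \<bar>f x\<bar> \<partial>M) = 0" by (rule not_integrable_integral_eq)
    moreover have "0 \<le> B" using assms(2)[of undefined] by simp
    ultimately show ?thesis by simp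
  qed
  also have "\<dots> = B" by (simp add: prob_space)
  finally show ?thesis .
qed

lemma jensen_ln:
  fixes h :: "'c::metric_space \<Rightarrow> real"
  assumes cpt: "compact (UNIV::'c set)" and M: "prob_space M" "sets M = sets borel"
    and hc: "continuous_on UNIV h" and hp: "\<And>x. h x > 0"
  shows "(\<integral>x. ln (h x) \<partial>M) \<le> ln (\<integral>x. h x \<partial>M)"
proof -
  interpret prob_space M by fact
  obtain c where c: "c > 0" "\<And>x. h x \<ge> c" using cont_pos_min[OF cpt hc hp] by blast
  have ih: "integrable M h" using cont_integrable[OF cpt hc _ M(2)] finite_measure_axioms by blast
  have "(\<integral>x. c \<partial>M) \<le> (\<integral>x. h x \<partial>M)" using c ih by (intro integral_mono) auto
  then have mpos: "(\<integral>x. h x \<partial>M) > 0" using c by (simp add: prob_space)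
  define m where "m = (\<integral>x. h x \<partial>M)"
  have lnc: "continuous_on UNIV (\<lambda>x. ln (h x))" using hc hp by (intro continuous_intros) (auto simp: less_imp_neq[symmetric])
  have il: "integrable M (\<lambda>x. ln (h x))" using cont_integrable[OF cpt lnc _ M(2)] finite_measure_axioms by blast
  have pt: "ln (h x) \<le> ln m + h x / m - 1" for x
  proof -
    have "ln (h x / m) \<le> h x / m - 1" using hp[of x] mpos unfolding m_def by (intro ln_le_minus_one) auto
    then show ?thesis using hp[of x] mpos unfolding m_def by (simp add: ln_div)
  qed
  have "(\<integral>x. ln (h x) \<partial>M) \<le> (\<integral>x. ln m + h x / m - 1 \<partial>M)"
    using pt il ih by (intro integral_mono) auto
  also have "\<dots> = ln m + m / m - 1" using ih unfolding m_def by (simp add: prob_space)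
  also have "\<dots> = ln m" using mpos unfolding m_def by simp
  finally show ?thesis unfolding m_def .
qed

locale sys =
  fixes \<tau> :: "'b::metric_space \<Rightarrow> 'a::metric_space \<Rightarrow> 'a" and \<mu> :: "'b measure"
  assumes cX: "compact (UNIV :: 'a set)" and cT: "compact (UNIV :: 'b set)"
    and tc: "continuous_on UNIV (\<lambda>(\<theta>, x). \<tau> \<theta> x)"
    and mp: "prob_space \<mu>" and ms: "sets \<mu> = sets borel"
begin

lemma tc_swap: "continuous_on UNIV (\<lambda>\<omega>::'a \<times> 'b. \<tau> (snd \<omega>) (fst \<omega>))"
proof -
  have "continuous_on UNIV (\<lambda>\<omega>::'a \<times> 'b. (snd \<omega>, fst \<omega>))" by (intro continuous_intros)
  from continuous_on_compose2[OF tc this] show ?thesis by simp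
qed

lemma tc_pair: "continuous_on UNIV (\<lambda>(x::'a, \<theta>::'b). \<tau> \<theta> x)"
  using tc_swap by (simp add: case_prod_beta')

lemma tc_theta: "continuous_on UNIV (\<lambda>\<theta>. \<tau> \<theta> x)"
proof -
  have "continuous_on UNIV (\<lambda>\<theta>::'b. (\<theta>, x))" by (intro continuous_intros)
  from continuous_on_compose2[OF tc this] show ?thesis by simp
qed

lemma Bop_integrable:
  fixes g \<psi> :: "'a \<Rightarrow> real"
  assumes "continuous_on UNIV g" "continuous_on UNIV \<psi>"
  shows "integrable \<mu> (\<lambda>\<theta>. g (\<tau> \<theta> x) * \<psi> (\<tau> \<theta> x))"
proof -
  have "continuous_on UNIV (\<lambda>\<theta>. g (\<tau> \<theta> x) * \<psi> (\<tau> \<theta> x))"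
    by (intro continuous_intros continuous_on_compose2[OF assms(1) tc_theta] continuous_on_compose2[OF assms(2) tc_theta]) auto
  moreover have "finite_measure \<mu>" using mp by (rule prob_space.finite_measure)
  ultimately show ?thesis using cont_integrable[OF cT _ _ ms] by blast
qed

lemma Bop_cont:
  fixes g \<psi> :: "'a \<Rightarrow> real"
  assumes gc: "continuous_on UNIV g" and pc: "continuous_on UNIV \<psi>"
  shows "continuous_on UNIV (Bop \<mu> \<tau> \<psi> g)"
proof -
  interpret prob_space \<mu> by (rule mp)
  define H where "H = (\<lambda>(\<theta>, x). g (\<tau> \<theta> x) * \<psi> (\<tau> \<theta> x))"
  have Hc: "continuous_on UNIV H"
  proof -
    have "continuous_on UNIV (\<lambda>p::'b \<times> 'a. g ((\<lambda>(\<theta>, x). \<tau> \<theta> x) p) * \<psi> ((\<lambda>(\<theta>, x). \<tau> \<theta> x) p))"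
      by (intro continuous_intros continuous_on_compose2[OF gc tc] continuous_on_compose2[OF pc tc]) auto
    then show ?thesis unfolding H_def by (simp add: case_prod_beta')
  qed
  have "compact (UNIV :: ('b \<times> 'a) set)" using compact_Times[OF cT cX] by simp
  then have uc: "uniformly_continuous_on UNIV H" using Hc compact_uniformly_continuous by blast
  show ?thesis
    unfolding continuous_on_iff
  proof (intro ballI allI impI)
    fix x0 :: 'a and eps :: real assume "eps > 0"
    then obtain d where d: "d > 0" "\<And>p p'. dist p' p < d \<Longrightarrow> dist (H p') (H p) < eps / 2"
      using uc unfolding uniformly_continuous_on_def by (metis half_gt_zero UNIV_I)
    show "\<exists>d>0. \<forall>x'\<in>UNIV. dist x' x0 < d \<longrightarrow> dist (Bop \<mu> \<tau> \<psi> g x') (Bop \<mu> \<tau> \<psi> g x0) < eps"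
    proof (intro exI[where x=d] conjI ballI impI)
      show "d > 0" by fact
      fix x' assume x': "dist x' x0 < d"
      have hd: "\<bar>H (\<theta>, x') - H (\<theta>, x0)\<bar> \<le> eps / 2" for \<theta>
      proof -
        have "dist (\<theta>, x') (\<theta>, x0) < d" using x' by (simp add: dist_Pair_Pair)
        from d(2)[OF this] show ?thesis by (simp add: dist_real_def)
      qed
      have i1: "integrable \<mu> (\<lambda>\<theta>. H (\<theta>, x'))" and i2: "integrable \<mu> (\<lambda>\<theta>. H (\<theta>, x0))"
        using Bop_integrable[OF gc pc] by (simp_all add: H_def)
      have "Bop \<mu> \<tau> \<psi> g x' - Bop \<mu> \<tau> \<psi> g x0 = (\<integral>\<theta>. H (\<theta>, x') - H (\<theta>, x0) \<partial>\<mu>)"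
        unfolding Bop_def H_def using i1 i2 by (simp add: H_def)
      also have "\<bar>\<dots>\<bar> \<le> eps / 2" by (rule prob_integral_bound[OF mp hd])
      finally show "dist (Bop \<mu> \<tau> \<psi> g x') (Bop \<mu> \<tau> \<psi> g x0) < eps" using \<open>eps > 0\<close> by (simp add: dist_real_def)
    qed
  qed
qed

lemma Bop_pos:
  fixes g \<psi> :: "'a \<Rightarrow> real"
  assumes "continuous_on UNIV g" "continuous_on UNIV \<psi>" "\<And>x. g x > 0" "\<And>x. \<psi> x > 0"
  shows "Bop \<mu> \<tau> \<psi> g x > 0"
proof -
  interpret prob_space \<mu> by (rule mp)
  have hc: "continuous_on UNIV (\<lambda>\<theta>. g (\<tau> \<theta> x) * \<psi> (\<tau> \<theta> x))"
    by (intro continuous_intros continuous_on_compose2[OF assms(1) tc_theta] continuous_on_compose2[OF assms(2) tc_theta]) auto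
  obtain c where c: "c > 0" "\<And>\<theta>. g (\<tau> \<theta> x) * \<psi> (\<tau> \<theta> x) \<ge> c"
    using cont_pos_min[OF cT hc] assms(3,4) by (metis mult_pos_pos)
  have "(\<integral>\<theta>. c \<partial>\<mu>) \<le> Bop \<mu> \<tau> \<psi> g x"
    unfolding Bop_def using c Bop_integrable[OF assms(1,2)] by (intro integral_mono) auto
  then show ?thesis using c by (simp add: prob_space)
qed

lemma Phi_prob: "prob_space N \<Longrightarrow> sets N = sets borel \<Longrightarrow> prob_space (Phi N) \<and> sets (Phi N) = sets borel"
  unfolding Phi_def
  by (auto intro!: prob_space.prob_space_distr cont_meas continuous_intros)

lemma Phi_integral:
  fixes h :: "'a \<Rightarrow> real"
  assumes "prob_space N" "sets N = sets (borel :: ('a \<times> 'b) measure)" "continuous_on UNIV h"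
  shows "(\<integral>x. h x \<partial>Phi N) = (\<integral>\<omega>. h (fst \<omega>) \<partial>N)"
  unfolding Phi_def
  by (rule integral_distr) (auto intro!: cont_meas continuous_intros assms borel_measurable_continuous_onI)

lemma posC_iff: "g \<in> posC \<longleftrightarrow> continuous_on UNIV g \<and> (\<forall>x. g x > 0)"
  by (simp add: posC_def)

lemma lnratio_cont:
  fixes g \<psi> :: "'a \<Rightarrow> real"
  assumes "g \<in> posC" "\<psi> \<in> posC"
  shows "continuous_on UNIV (\<lambda>x. ln (Bop \<mu> \<tau> \<psi> g x / g x))"
proof -
  have gc: "continuous_on UNIV g" "\<And>x. g x > 0" and pc: "continuous_on UNIV \<psi>" "\<And>x. \<psi> x > 0"
    using assms by (auto simp: posC_def)
  have bp: "\<And>x. Bop \<mu> \<tau> \<psi> g x > 0" using Bop_pos[OF gc(1) pc(1) gc(2) pc(2)] .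
  have "\<And>x. Bop \<mu> \<tau> \<psi> g x / g x > 0" using bp gc(2) by simp
  then show ?thesis
    using Bop_cont[OF gc(1) pc(1)] gc bp
    by (intro continuous_intros) (auto simp: less_imp_neq[symmetric])
qed

lemma one_posC: "(\<lambda>_. 1) \<in> posC" by (simp add: posC_def)

lemma infB_posC: "infB \<mu> \<tau> \<psi> N = (INF g\<in>posC. ereal (\<integral>x. ln (Bop \<mu> \<tau> \<psi> g x / g x) \<partial>Phi N))"
  unfolding infB_def posC_def ..

lemma infB_shift:
  fixes \<psi> :: "'a \<Rightarrow> real"
  assumes Np: "prob_space N" and Ns: "sets N = sets (borel :: ('a \<times> 'b) measure)" and psi: "\<psi> \<in> posC"
  shows "infB \<mu> \<tau> \<psi> N = entropy_v \<mu> \<tau> N + ereal (\<integral>x. ln (\<psi> x) \<partial>Phi N)"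
proof -
  have nu: "prob_space (Phi N)" "sets (Phi N) = sets borel" using Phi_prob[OF Np Ns] by auto
  have finnu: "finite_measure (Phi N)" using nu(1) by (rule prob_space.finite_measure)
  have pc: "continuous_on UNIV \<psi>" "\<And>x. \<psi> x > 0" using psi by (auto simp: posC_def)
  define E where "E h = (\<integral>x. ln (Bop \<mu> \<tau> (\<lambda>_. 1) h x / h x) \<partial>Phi N)" for h :: "'a \<Rightarrow> real"
  define c where "c = (\<integral>x. ln (\<psi> x) \<partial>Phi N)"
  have lnpc: "continuous_on UNIV (\<lambda>x. ln (\<psi> x))" using pc by (intro continuous_intros) (auto simp: less_imp_neq[symmetric])
  have key: "(\<integral>x. ln (Bop \<mu> \<tau> \<psi> g x / g x) \<partial>Phi N) = E (\<lambda>x. g x * \<psi> x) + c" if g: "g \<in> posC" for g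
  proof -
    have gc: "continuous_on UNIV g" "\<And>x. g x > 0" using g by (auto simp: posC_def)
    have gp: "(\<lambda>x. g x * \<psi> x) \<in> posC" using gc pc by (auto simp: posC_def intro!: continuous_intros)
    have B: "Bop \<mu> \<tau> \<psi> g x = Bop \<mu> \<tau> (\<lambda>_. 1) (\<lambda>x. g x * \<psi> x) x" for x by (simp add: Bop_def)
    have Bp: "Bop \<mu> \<tau> \<psi> g x > 0" for x using Bop_pos[OF gc(1) pc(1) gc(2) pc(2)] .
    have pw: "ln (Bop \<mu> \<tau> \<psi> g x / g x) = ln (Bop \<mu> \<tau> (\<lambda>_. 1) (\<lambda>x. g x * \<psi> x) x / (g x * \<psi> x)) + ln (\<psi> x)" for x
      using Bp[of x] gc(2)[of x] pc(2)[of x] B[of x] by (simp add: ln_div ln_mult)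
    have i1: "integrable (Phi N) (\<lambda>x. ln (Bop \<mu> \<tau> (\<lambda>_. 1) (\<lambda>x. g x * \<psi> x) x / (g x * \<psi> x)))"
      using cont_integrable[OF cX lnratio_cont[OF gp one_posC] finnu nu(2)] .
    have i2: "integrable (Phi N) (\<lambda>x. ln (\<psi> x))" using cont_integrable[OF cX lnpc finnu nu(2)] .
    have "(\<integral>x. ln (Bop \<mu> \<tau> \<psi> g x / g x) \<partial>Phi N) =
      (\<integral>x. ln (Bop \<mu> \<tau> (\<lambda>_. 1) (\<lambda>x. g x * \<psi> x) x / (g x * \<psi> x)) + ln (\<psi> x) \<partial>Phi N)"
      using pw by simp
    also have "\<dots> = E (\<lambda>x. g x * \<psi> x) + c" unfolding E_def c_def using i1 i2 by simp
    finally show ?thesis .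
  qed
  have img: "(\<lambda>g x. g x * \<psi> x) ` posC = posC"
  proof
    show "(\<lambda>g x. g x * \<psi> x) ` posC \<subseteq> posC" using pc by (auto simp: posC_def intro!: continuous_intros)
    show "posC \<subseteq> (\<lambda>g x. g x * \<psi> x) ` posC"
    proof
      fix h :: "'a \<Rightarrow> real" assume h: "h \<in> posC"
      then have hp: "(\<lambda>x. h x / \<psi> x) \<in> posC" using pc
        by (auto simp: posC_def intro!: continuous_intros simp: less_imp_neq[symmetric])
      have hh: "h = (\<lambda>g x. g x * \<psi> x) (\<lambda>x. h x / \<psi> x)" using pc(2) by (auto simp: less_imp_neq[symmetric])
      show "h \<in> (\<lambda>g x. g x * \<psi> x) ` posC" using hh hp by (rule image_eqI)
    qed
  qed
  have "infB \<mu> \<tau> \<psi> N = (INF g\<in>posC. ereal (E (\<lambda>x. g x * \<psi> x) + c))"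
    unfolding infB_posC using key by (intro INF_cong) auto
  also have "\<dots> = (INF h\<in>(\<lambda>g x. g x * \<psi> x) ` posC. ereal (E h + c))" by (simp add: image_image)
  also have "\<dots> = (INF h\<in>posC. ereal (E h) + ereal c)" unfolding img by simp
  also have "\<dots> = (INF h\<in>posC. ereal (E h)) + ereal c" by (rule INF_add_ereal_const)
  also have "(INF h\<in>posC. ereal (E h)) = entropy_v \<mu> \<tau> N"
    unfolding entropy_v_def infB_posC E_def ..
  finally show ?thesis unfolding c_def .
qed

lemma entropy_le0:
  assumes "prob_space N" "sets N = sets (borel :: ('a \<times> 'b) measure)"
  shows "entropy_v \<mu> \<tau> N \<le> 0"
proof -
  have "Bop \<mu> \<tau> (\<lambda>_. 1) (\<lambda>_. 1) x = 1" for x using mp by (simp add: Bop_def prob_space.prob_space)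
  then have "ereal (\<integral>x. ln (Bop \<mu> \<tau> (\<lambda>_. 1) (\<lambda>_. 1) x / 1) \<partial>Phi N) = 0" by simp
  moreover have "entropy_v \<mu> \<tau> N \<le> ereal (\<integral>x. ln (Bop \<mu> \<tau> (\<lambda>_. 1) (\<lambda>_. 1) x / 1) \<partial>Phi N)"
    unfolding entropy_v_def infB_posC using one_posC by (rule INF_lower2) simp
  ultimately show ?thesis by (simp add: zero_ereal_def)
qed

lemma ln_bound:
  fixes \<psi> :: "'a \<Rightarrow> real"
  assumes "\<psi> \<in> posC"
  shows "\<exists>K. \<forall>x. \<bar>ln (\<psi> x)\<bar> \<le> K"
proof -
  have "continuous_on UNIV (\<lambda>x. ln (\<psi> x))" using assms
    by (auto simp: posC_def less_imp_neq[symmetric] intro!: continuous_intros)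
  then show ?thesis using cont_bounded[OF cX, of "\<lambda>x. ln (\<psi> x)"] by blast
qed

lemma Phi_int_bound:
  fixes h :: "'a \<Rightarrow> real"
  assumes "prob_space N" "sets N = sets (borel :: ('a \<times> 'b) measure)" "\<And>x. \<bar>h x\<bar> \<le> K"
  shows "\<bar>\<integral>x. h x \<partial>Phi N\<bar> \<le> K"
  using prob_integral_bound[of "Phi N" h K] Phi_prob[OF assms(1,2)] assms(3) by auto

lemma pressure_le:
  fixes \<psi> :: "'a \<Rightarrow> real"
  assumes psi: "\<psi> \<in> posC"
  shows "\<exists>K. pressure \<mu> \<tau> \<psi> \<le> ereal K"
proof -
  obtain K where K: "\<And>x. \<bar>ln (\<psi> x)\<bar> \<le> K" using ln_bound[OF psi] by blast
  have "infB \<mu> \<tau> \<psi> N \<le> ereal K" if "holonomic \<tau> N" for N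
  proof -
    have N: "prob_space N" "sets N = sets borel" using that by (auto simp: holonomic_def)
    have "infB \<mu> \<tau> \<psi> N = entropy_v \<mu> \<tau> N + ereal (\<integral>x. ln (\<psi> x) \<partial>Phi N)" by (rule infB_shift[OF N psi])
    also have "\<dots> \<le> 0 + ereal K"
      using entropy_le0[OF N] Phi_int_bound[OF N, of "\<lambda>x. ln (\<psi> x)" K] K by (intro add_mono) auto
    finally show ?thesis by simp
  qed
  then show ?thesis unfolding pressure_def by (intro exI[where x=K] SUP_least) auto
qed

end


context sys begin

lemma pair_sets: "sets N1 = sets borel \<Longrightarrow> sets (N1 \<Otimes>\<^sub>M \<mu>) = sets (borel :: ('a \<times> 'b) measure)"
  using sets_pair_measure_cong[of N1 borel \<mu> borel] ms borel_pair_eq[OF cX cT] by simp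

lemma pps: "prob_space N1 \<Longrightarrow> pair_prob_space N1 \<mu>"
  unfolding pair_prob_space_def pair_sigma_finite_def
  using mp by (auto intro: prob_space_imp_sigma_finite)

lemma fubini_cont:
  fixes F :: "'a \<times> 'b \<Rightarrow> real"
  assumes N1: "prob_space N1" "sets N1 = sets borel" and Fc: "continuous_on UNIV F"
  shows "(\<integral>\<omega>. F \<omega> \<partial>(N1 \<Otimes>\<^sub>M \<mu>)) = (\<integral>x. (\<integral>\<theta>. F (x, \<theta>) \<partial>\<mu>) \<partial>N1)"
proof -
  interpret pair_prob_space N1 \<mu> using pps[OF N1(1)] .
  have cp: "compact (UNIV :: ('a \<times> 'b) set)" using compact_Times[OF cX cT] by simp
  have "integrable (N1 \<Otimes>\<^sub>M \<mu>) F"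
    using cont_integrable[OF cp Fc _ pair_sets[OF N1(2)]] prob_space_pair[OF N1(1) mp] prob_space.finite_measure by blast
  from integral_fst'[OF this] show ?thesis by simp
qed

primrec nu :: "nat \<Rightarrow> 'a measure" where
  "nu 0 = return borel undefined"
| "nu (Suc k) = distr (nu k \<Otimes>\<^sub>M \<mu>) borel (\<lambda>(x, \<theta>). \<tau> \<theta> x)"

declare nu.simps(2)[simp del]

lemma nu_prob: "prob_space (nu k) \<and> sets (nu k) = sets borel"
proof (induction k)
  case 0 then show ?case by (simp add: prob_space_return)
next
  case (Suc k)
  have m: "(\<lambda>(x, \<theta>). \<tau> \<theta> x) \<in> (nu k \<Otimes>\<^sub>M \<mu>) \<rightarrow>\<^sub>M borel"
    using cont_meas[OF tc_pair pair_sets] Suc by blast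
  show ?case using prob_space.prob_space_distr[OF prob_space_pair[OF _ mp] m] Suc by (simp add: nu.simps(2))
qed

lemma Bm_cont: "continuous_on UNIV (f::'a \<Rightarrow> real) \<Longrightarrow> continuous_on UNIV (Bop \<mu> \<tau> (\<lambda>_. 1) f)"
  by (rule Bop_cont) simp_all

lemma nu_step:
  fixes f :: "'a \<Rightarrow> real"
  assumes fc: "continuous_on UNIV f"
  shows "(\<integral>x. f x \<partial>nu (Suc k)) = (\<integral>x. Bop \<mu> \<tau> (\<lambda>_. 1) f x \<partial>nu k)"
proof -
  have N: "prob_space (nu k)" "sets (nu k) = sets borel" using nu_prob by auto
  have m: "(\<lambda>(x, \<theta>). \<tau> \<theta> x) \<in> (nu k \<Otimes>\<^sub>M \<mu>) \<rightarrow>\<^sub>M borel"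
    using cont_meas[OF tc_pair pair_sets[OF N(2)]] .
  have Fc: "continuous_on UNIV (\<lambda>\<omega>::'a \<times> 'b. f ((\<lambda>(x, \<theta>). \<tau> \<theta> x) \<omega>))"
    by (rule continuous_on_compose2[OF fc tc_pair]) simp
  have "(\<integral>x. f x \<partial>nu (Suc k)) = (\<integral>\<omega>. f ((\<lambda>(x, \<theta>). \<tau> \<theta> x) \<omega>) \<partial>(nu k \<Otimes>\<^sub>M \<mu>))"
    by (simp add: integral_distr[OF m borel_measurable_continuous_onI[OF fc]] nu.simps(2))
  also have "\<dots> = (\<integral>x. (\<integral>\<theta>. f (\<tau> \<theta> x) \<partial>\<mu>) \<partial>nu k)" using fubini_cont[OF N Fc] by simp
  also have "\<dots> = (\<integral>x. Bop \<mu> \<tau> (\<lambda>_. 1) f x \<partial>nu k)" by (simp add: Bop_def)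
  finally show ?thesis .
qed

definition nb :: "nat \<Rightarrow> 'a measure" where
  "nb n = measure_pmf (pmf_of_set {..n}) \<bind> nu"

lemma nu_meas: "nu \<in> measure_pmf P \<rightarrow>\<^sub>M subprob_algebra borel"
  unfolding measurable_pmf_measure1 space_subprob_algebra
  using nu_prob by (auto intro: prob_space_imp_subprob_space)

lemma nb_prob: "prob_space (nb n) \<and> sets (nb n) = sets borel"
proof
  show "prob_space (nb n)" unfolding nb_def
    by (rule measure_pmf.prob_space_bind[OF _ nu_meas]) (simp add: nu_prob)
  show "sets (nb n) = sets borel" unfolding nb_def
    by (rule sets_bind) (simp_all add: nu_prob)
qed

lemma nb_int:
  fixes f :: "'a \<Rightarrow> real"
  assumes fc: "continuous_on UNIV f"
  shows "(\<integral>x. f x \<partial>nb n) = (\<Sum>k\<le>n. \<integral>x. f x \<partial>nu k) / real (Suc n)"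
proof -
  obtain B where B: "\<And>x. \<bar>f x\<bar> \<le> B" using cont_bounded[OF cX fc] by blast
  have "(\<integral>x. f x \<partial>nb n) = (\<integral>k. (\<integral>x. f x \<partial>nu k) \<partial>measure_pmf (pmf_of_set {..n}))"
    unfolding nb_def
  proof (rule integral_bind[where K=borel and B=B and B'=1])
    show "f \<in> borel_measurable borel" using fc by (rule borel_measurable_continuous_onI)
    show "\<And>x. x \<in> space borel \<Longrightarrow> \<bar>f x\<bar> \<le> B" using B by simp
    show "nu \<in> measure_pmf (pmf_of_set {..n}) \<rightarrow>\<^sub>M subprob_algebra borel" by (rule nu_meas)
    show "finite_measure (measure_pmf (pmf_of_set {..n}))" by (rule prob_space.finite_measure) (rule prob_space_measure_pmf)
    show "AE x in measure_pmf (pmf_of_set {..n}). emeasure (nu x) (space (nu x)) \<le> ennreal 1"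
      using nu_prob by (simp add: prob_space.emeasure_space_1)
  qed
  also have "\<dots> = (\<Sum>k\<le>n. \<integral>x. f x \<partial>nu k) / real (card {..n})"
    by (rule integral_pmf_of_set) auto
  finally show ?thesis by simp
qed

lemma telescope: "(\<Sum>k\<le>n. (g (Suc k) - g k :: real)) = g (Suc n) - g 0"
  by (induction n) auto

lemma over_n_lim: "(\<lambda>n. c / real (Suc n)) \<longlonglongrightarrow> 0"
  using LIMSEQ_Suc[OF lim_const_over_n[of c]] by simp

lemma null_by_bound:
  assumes H: "\<And>n. \<bar>X n\<bar> \<le> c / real (Suc n)" shows "X \<longlonglongrightarrow> (0::real)"
proof (rule Lim_null_comparison[OF _ over_n_lim[of c]])
  show "\<forall>\<^sub>F n in sequentially. norm (X n) \<le> c / real (Suc n)"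
    using H by (intro always_eventually allI) simp
qed

lemma nu_bound:
  fixes f :: "'a \<Rightarrow> real"
  assumes "\<And>x. \<bar>f x\<bar> \<le> B"
  shows "\<bar>\<integral>x. f x \<partial>nu k\<bar> \<le> B"
  using prob_integral_bound[of "nu k" f B] nu_prob assms by auto

lemma nu_integrable: "continuous_on UNIV (f::'a \<Rightarrow> real) \<Longrightarrow> integrable (nu k) f"
  using cont_integrable[OF cX _ _, of f "nu k"] nu_prob prob_space.finite_measure by blast

lemma Bm_minus_int:
  fixes f :: "'a \<Rightarrow> real"
  assumes fc: "continuous_on UNIV f"
  shows "(\<integral>x. Bop \<mu> \<tau> (\<lambda>_. 1) f x - f x \<partial>nu k) = (\<integral>x. f x \<partial>nu (Suc k)) - (\<integral>x. f x \<partial>nu k)"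
  using nu_step[OF fc, of k] nu_integrable[OF Bm_cont[OF fc], of k] nu_integrable[OF fc, of k] by simp

lemma exists_stationary: "\<exists>N. holonomic \<tau> N \<and> entropy_v \<mu> \<tau> N \<ge> 0"
proof -
  obtain r nbar where r: "strict_mono r" and nbp: "prob_space nbar" and nbs: "sets nbar = sets borel"
    and lim: "\<And>F. continuous_on UNIV F \<Longrightarrow> (\<lambda>n. \<integral>x. F x \<partial>nb (r n)) \<longlonglongrightarrow> (\<integral>x. (F x :: real) \<partial>nbar)"
    using weak_compact[OF cX, of nb] nb_prob by blast
  define N where "N = nbar \<Otimes>\<^sub>M \<mu>"
  have Np: "prob_space N" unfolding N_def using nbp mp by (rule prob_space_pair)
  have Ns: "sets N = sets (borel :: ('a \<times> 'b) measure)" unfolding N_def using nbs by (rule pair_sets)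
  have lim0: "(\<integral>x. h x \<partial>nbar) = 0"
    if hc: "continuous_on UNIV h" and hsum: "\<And>n. \<bar>\<integral>x. h x \<partial>nb n\<bar> \<le> c / real (Suc n)" for h c
  proof -
    have "(\<lambda>n. \<integral>x. h x \<partial>nb n) \<longlonglongrightarrow> 0" using hsum by (rule null_by_bound)
    then have "(\<lambda>n. \<integral>x. h x \<partial>nb (r n)) \<longlonglongrightarrow> 0" using LIMSEQ_subseq_LIMSEQ[OF _ r] by (simp add: comp_def)
    then show ?thesis using lim[OF hc] LIMSEQ_unique by blast
  qed
  have hol: "holonomic \<tau> N"
    unfolding holonomic_def
  proof (intro conjI allI impI)
    show "prob_space N" "sets N = sets borel" by fact+
    fix f :: "'a \<Rightarrow> real" assume fc: "continuous_on UNIV f"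
    obtain B where B: "\<And>x. \<bar>f x\<bar> \<le> B" using cont_bounded[OF cX fc] by blast
    define h where "h x = Bop \<mu> \<tau> (\<lambda>_. 1) f x - f x" for x
    have hc: "continuous_on UNIV h" unfolding h_def using Bm_cont[OF fc] fc by (intro continuous_intros)
    have Fc: "continuous_on UNIV (\<lambda>\<omega>::'a \<times> 'b. f (\<tau> (snd \<omega>) (fst \<omega>)) - f (fst \<omega>))"
      by (intro continuous_intros continuous_on_compose2[OF fc tc_swap] continuous_on_compose2[OF fc continuous_on_fst]) auto
    have "(\<integral>\<omega>. f (\<tau> (snd \<omega>) (fst \<omega>)) - f (fst \<omega>) \<partial>N) = (\<integral>x. (\<integral>\<theta>. f (\<tau> \<theta> x) - f x \<partial>\<mu>) \<partial>nbar)"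
      unfolding N_def using fubini_cont[OF nbp nbs Fc] by simp
    also have "\<dots> = (\<integral>x. h x \<partial>nbar)"
    proof -
      have "(\<integral>\<theta>. f (\<tau> \<theta> x) - f x \<partial>\<mu>) = h x" for x
      proof -
        have i1: "integrable \<mu> (\<lambda>\<theta>. f (\<tau> \<theta> x))" using Bop_integrable[OF fc, of "\<lambda>_. 1" x] by simp
        have ic: "integrable \<mu> (\<lambda>\<theta>. f x)" using mp by (simp add: prob_space.finite_measure finite_measure.integrable_const)
        show ?thesis using mp by (simp add: Bochner_Integration.integral_diff[OF i1 ic] h_def Bop_def prob_space.prob_space)
      qed
      then show ?thesis by simp
    qed
    also have "\<dots> = 0"
    proof (rule lim0[OF hc])
      fix n
      have "(\<integral>x. h x \<partial>nb n) = (\<Sum>k\<le>n. \<integral>x. h x \<partial>nu k) / real (Suc n)" by (rule nb_int[OF hc])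
      also have "\<dots> = (\<Sum>k\<le>n. (\<integral>x. f x \<partial>nu (Suc k)) - (\<integral>x. f x \<partial>nu k)) / real (Suc n)"
        unfolding h_def using Bm_minus_int[OF fc] by simp
      also have "\<dots> = ((\<integral>x. f x \<partial>nu (Suc n)) - (\<integral>x. f x \<partial>nu 0)) / real (Suc n)"
        by (subst telescope[where g="\<lambda>k. \<integral>x. f x \<partial>nu k"]) simp
      finally have eq: "(\<integral>x. h x \<partial>nb n) = ((\<integral>x. f x \<partial>nu (Suc n)) - (\<integral>x. f x \<partial>nu 0)) / real (Suc n)" .
      have "\<bar>(\<integral>x. f x \<partial>nu (Suc n)) - (\<integral>x. f x \<partial>nu 0)\<bar> \<le> 2 * B"
        using nu_bound[of f B, OF B, of "Suc n"] nu_bound[of f B, OF B, of 0] by linarith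
      then show "\<bar>\<integral>x. h x \<partial>nb n\<bar> \<le> 2 * B / real (Suc n)"
        unfolding eq by (simp add: divide_right_mono)
    qed
    finally show "(\<integral>\<omega>. f (\<tau> (snd \<omega>) (fst \<omega>)) - f (fst \<omega>) \<partial>N) = 0" .
  qed
  have ent: "entropy_v \<mu> \<tau> N \<ge> 0"
    unfolding entropy_v_def infB_posC
  proof (rule INF_greatest)
    fix g :: "'a \<Rightarrow> real" assume g: "g \<in> posC"
    have gc: "continuous_on UNIV g" "\<And>x. g x > 0" using g by (auto simp: posC_def)
    define h where "h x = ln (Bop \<mu> \<tau> (\<lambda>_. 1) g x / g x)" for x
    have hc: "continuous_on UNIV h" unfolding h_def using lnratio_cont[OF g one_posC] .
    define L where "L x = ln (g x)" for x
    have Lc: "continuous_on UNIV L" unfolding L_def using gc by (intro continuous_intros) (auto simp: less_imp_neq[symmetric])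
    obtain K where K: "\<And>x. \<bar>L x\<bar> \<le> K" using cont_bounded[OF cX Lc] by blast
    have pw: "h x \<ge> Bop \<mu> \<tau> (\<lambda>_. 1) L x - L x" for x
    proof -
      have tcg: "continuous_on UNIV (\<lambda>\<theta>. g (\<tau> \<theta> x))" by (rule continuous_on_compose2[OF gc(1) tc_theta]) simp
      have "(\<integral>\<theta>. ln (g (\<tau> \<theta> x)) \<partial>\<mu>) \<le> ln (\<integral>\<theta>. g (\<tau> \<theta> x) \<partial>\<mu>)"
        by (rule jensen_ln[OF cT mp ms tcg gc(2)])
      moreover have "Bop \<mu> \<tau> (\<lambda>_. 1) g x > 0" using Bop_pos[OF gc(1) _ gc(2)] by simp
      ultimately show ?thesis using gc(2)[of x] unfolding h_def L_def Bop_def by (simp add: ln_div)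
    qed
    have "(\<integral>x. h x \<partial>nbar) \<ge> 0"
    proof (rule LIMSEQ_le[OF _ lim[OF hc]])
      show "(\<lambda>n. - (2 * K) / real (Suc (r n))) \<longlonglongrightarrow> 0"
        using LIMSEQ_subseq_LIMSEQ[OF over_n_lim[of "- (2 * K)"] r] by (simp add: comp_def)
      show "\<exists>N. \<forall>n\<ge>N. - (2 * K) / real (Suc (r n)) \<le> (\<integral>x. h x \<partial>nb (r n))"
      proof (intro exI allI impI)
        fix n
        have step: "(\<integral>x. h x \<partial>nu k) \<ge> (\<integral>x. L x \<partial>nu (Suc k)) - (\<integral>x. L x \<partial>nu k)" for k
        proof -
          have "(\<integral>x. Bop \<mu> \<tau> (\<lambda>_. 1) L x - L x \<partial>nu k) \<le> (\<integral>x. h x \<partial>nu k)"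
            using pw nu_integrable[OF hc] nu_integrable[of "\<lambda>x. Bop \<mu> \<tau> (\<lambda>_. 1) L x - L x"] Bm_cont[OF Lc] Lc
            by (intro integral_mono) (auto intro!: continuous_intros)
          then show ?thesis using Bm_minus_int[OF Lc, of k] by simp
        qed
        let ?m = "r n"
        have "(\<Sum>k\<le>?m. (\<integral>x. L x \<partial>nu (Suc k)) - (\<integral>x. L x \<partial>nu k)) \<le> (\<Sum>k\<le>?m. \<integral>x. h x \<partial>nu k)"
          using step by (intro sum_mono) auto
        then have "((\<integral>x. L x \<partial>nu (Suc ?m)) - (\<integral>x. L x \<partial>nu 0)) / real (Suc ?m) \<le> (\<integral>x. h x \<partial>nb ?m)"
          unfolding nb_int[OF hc] telescope[where g="\<lambda>k. \<integral>x. L x \<partial>nu k"] by (simp add: divide_right_mono)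
        moreover have "- (2 * K) \<le> (\<integral>x. L x \<partial>nu (Suc ?m)) - (\<integral>x. L x \<partial>nu 0)"
          using nu_bound[of L K, OF K, of "Suc ?m"] nu_bound[of L K, OF K, of 0] by linarith
        then have "- (2 * K) / real (Suc ?m) \<le> ((\<integral>x. L x \<partial>nu (Suc ?m)) - (\<integral>x. L x \<partial>nu 0)) / real (Suc ?m)"
          by (rule divide_right_mono) simp
        ultimately show "- (2 * K) / real (Suc (r n)) \<le> (\<integral>x. h x \<partial>nb (r n))" by linarith
      qed
    qed
    moreover have "(\<integral>x. h x \<partial>Phi N) = (\<integral>x. h x \<partial>nbar)"
    proof -
      have "(\<integral>x. h x \<partial>Phi N) = (\<integral>\<omega>. h (fst \<omega>) \<partial>N)" by (rule Phi_integral[OF Np Ns hc])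
      also have "\<dots> = (\<integral>x. (\<integral>\<theta>. h x \<partial>\<mu>) \<partial>nbar)"
      proof -
        have hf: "continuous_on UNIV (\<lambda>\<omega>::'a \<times> 'b. h (fst \<omega>))"
          by (rule continuous_on_compose2[OF hc]) (auto intro: continuous_intros)
        show ?thesis unfolding N_def using fubini_cont[OF nbp nbs hf] by simp
      qed
      also have "\<dots> = (\<integral>x. h x \<partial>nbar)" using mp by (simp add: prob_space.prob_space)
      finally show ?thesis .
    qed
    ultimately show "0 \<le> ereal (\<integral>x. ln (Bop \<mu> \<tau> (\<lambda>_. 1) g x / g x) \<partial>Phi N)"
      unfolding h_def by simp
  qed
  show ?thesis using hol ent by blast
qed

end


context sys begin

lemma pressure_finite:
  fixes \<psi> :: "'a \<Rightarrow> real"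
  assumes psi: "\<psi> \<in> posC"
  shows "pressure \<mu> \<tau> \<psi> = ereal (real_of_ereal (pressure \<mu> \<tau> \<psi>))"
proof -
  obtain K where K: "pressure \<mu> \<tau> \<psi> \<le> ereal K" using pressure_le[OF psi] by blast
  obtain K' where K': "\<And>x. \<bar>ln (\<psi> x)\<bar> \<le> K'" using ln_bound[OF psi] by blast
  obtain N0 where N0: "holonomic \<tau> N0" "entropy_v \<mu> \<tau> N0 \<ge> 0" using exists_stationary by blast
  have N0p: "prob_space N0" "sets N0 = sets borel" using N0(1) by (auto simp: holonomic_def)
  have "ereal (- K') \<le> 0 + ereal (\<integral>x. ln (\<psi> x) \<partial>Phi N0)"
    using Phi_int_bound[OF N0p, of "\<lambda>x. ln (\<psi> x)" K'] K' by auto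
  also have "\<dots> \<le> entropy_v \<mu> \<tau> N0 + ereal (\<integral>x. ln (\<psi> x) \<partial>Phi N0)"
    using N0(2) by (intro add_right_mono) auto
  also have "\<dots> = infB \<mu> \<tau> \<psi> N0" by (rule infB_shift[OF N0p psi, symmetric])
  also have "\<dots> \<le> pressure \<mu> \<tau> \<psi>" unfolding pressure_def using N0(1) by (intro SUP_upper) auto
  finally have "ereal (- K') \<le> pressure \<mu> \<tau> \<psi>" .
  with K show ?thesis by (cases "pressure \<mu> \<tau> \<psi>") auto
qed

lemma holo_integrand_cont:
  fixes f :: "'a \<Rightarrow> real"
  assumes fc: "continuous_on UNIV f"
  shows "continuous_on UNIV (\<lambda>\<omega>::'a \<times> 'b. f (\<tau> (snd \<omega>) (fst \<omega>)) - f (fst \<omega>))"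
  by (intro continuous_intros continuous_on_compose2[OF fc tc_swap] continuous_on_compose2[OF fc continuous_on_fst]) auto

lemma existence:
  fixes \<psi> :: "'a \<Rightarrow> real"
  assumes psi: "\<psi> \<in> posC"
  shows "\<exists>N. equilibrium_state \<mu> \<tau> \<psi> N"
proof -
  define p where "p = real_of_ereal (pressure \<mu> \<tau> \<psi>)"
  have P: "pressure \<mu> \<tau> \<psi> = ereal p" unfolding p_def by (rule pressure_finite[OF psi])
  have "\<forall>n. \<exists>N. holonomic \<tau> N \<and> ereal (p - 1 / Suc n) < infB \<mu> \<tau> \<psi> N"
  proof
    fix n :: nat
    have "ereal (p - 1 / Suc n) < pressure \<mu> \<tau> \<psi>" using P by simp
    then show "\<exists>N. holonomic \<tau> N \<and> ereal (p - 1 / Suc n) < infB \<mu> \<tau> \<psi> N"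
      unfolding pressure_def less_SUP_iff by auto
  qed
  then obtain Ns :: "nat \<Rightarrow> ('a \<times> 'b) measure" where Ns: "\<And>n. holonomic \<tau> (Ns n)"
    "\<And>n. ereal (p - 1 / Suc n) < infB \<mu> \<tau> \<psi> (Ns n)" by metis
  have Nsp: "prob_space (Ns n)" "sets (Ns n) = sets borel" for n using Ns(1) by (auto simp: holonomic_def)
  have cp: "compact (UNIV :: ('a \<times> 'b) set)" using compact_Times[OF cX cT] by simp
  obtain r N where r: "strict_mono r" and Np: "prob_space N" and Nsb: "sets N = sets (borel :: ('a \<times> 'b) measure)"
    and lim: "\<And>F. continuous_on UNIV F \<Longrightarrow> (\<lambda>n. \<integral>x. F x \<partial>Ns (r n)) \<longlonglongrightarrow> (\<integral>x. (F x :: real) \<partial>N)"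
    using weak_compact[OF cp, of Ns] Nsp by blast
  have hol: "holonomic \<tau> N"
    unfolding holonomic_def
  proof (intro conjI allI impI)
    show "prob_space N" "sets N = sets borel" by fact+
    fix f :: "'a \<Rightarrow> real" assume fc: "continuous_on UNIV f"
    have "(\<lambda>n. \<integral>\<omega>. f (\<tau> (snd \<omega>) (fst \<omega>)) - f (fst \<omega>) \<partial>Ns (r n)) \<longlonglongrightarrow> (\<integral>\<omega>. f (\<tau> (snd \<omega>) (fst \<omega>)) - f (fst \<omega>) \<partial>N)"
      by (rule lim[OF holo_integrand_cont[OF fc]])
    moreover have "(\<integral>\<omega>. f (\<tau> (snd \<omega>) (fst \<omega>)) - f (fst \<omega>) \<partial>Ns (r n)) = 0" for n
      using Ns(1)[of "r n"] fc unfolding holonomic_def by blast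
    ultimately show "(\<integral>\<omega>. f (\<tau> (snd \<omega>) (fst \<omega>)) - f (fst \<omega>) \<partial>N) = 0"
      using LIMSEQ_unique[of "\<lambda>_. 0::real"] by simp
  qed
  have ge: "ereal p \<le> infB \<mu> \<tau> \<psi> N"
    unfolding infB_posC
  proof (rule INF_greatest)
    fix g :: "'a \<Rightarrow> real" assume g: "g \<in> posC"
    define h where "h x = ln (Bop \<mu> \<tau> \<psi> g x / g x)" for x
    have hc: "continuous_on UNIV h" unfolding h_def by (rule lnratio_cont[OF g psi])
    have hf: "continuous_on UNIV (\<lambda>\<omega>::'a \<times> 'b. h (fst \<omega>))"
      by (rule continuous_on_compose2[OF hc]) (auto intro: continuous_intros)
    have l: "(\<lambda>n. \<integral>x. h x \<partial>Phi (Ns (r n))) \<longlonglongrightarrow> (\<integral>x. h x \<partial>Phi N)"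
      using lim[OF hf] Phi_integral[OF Nsp hc] Phi_integral[OF Np Nsb hc] by simp
    have lb: "p - 1 / Suc (r n) \<le> (\<integral>x. h x \<partial>Phi (Ns (r n)))" for n
    proof -
      have "infB \<mu> \<tau> \<psi> (Ns (r n)) \<le> ereal (\<integral>x. h x \<partial>Phi (Ns (r n)))"
        unfolding infB_posC h_def using g by (rule INF_lower)
      with Ns(2)[of "r n"] have "ereal (p - 1 / Suc (r n)) < ereal (\<integral>x. h x \<partial>Phi (Ns (r n)))"
        by (rule order_less_le_trans)
      then show ?thesis by simp
    qed
    have "p \<le> (\<integral>x. h x \<partial>Phi N)"
    proof (rule LIMSEQ_le[OF _ l])
      have "(\<lambda>n. p - 1 / real (Suc n)) \<longlonglongrightarrow> p - 0" by (intro tendsto_diff tendsto_const over_n_lim)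
      from LIMSEQ_subseq_LIMSEQ[OF this r] show "(\<lambda>n. p - 1 / real (Suc (r n))) \<longlonglongrightarrow> p" by (simp add: comp_def)
      show "\<exists>N. \<forall>n\<ge>N. p - 1 / real (Suc (r n)) \<le> (\<integral>x. h x \<partial>Phi (Ns (r n)))" using lb by blast
    qed
    then show "ereal p \<le> ereal (\<integral>x. ln (Bop \<mu> \<tau> \<psi> g x / g x) \<partial>Phi N)" unfolding h_def by simp
  qed
  have le: "infB \<mu> \<tau> \<psi> N \<le> pressure \<mu> \<tau> \<psi>" unfolding pressure_def using hol by (intro SUP_upper) auto
  have "entropy_v \<mu> \<tau> N + ereal (\<integral>x. ln (\<psi> x) \<partial>Phi N) = pressure \<mu> \<tau> \<psi>"
    using infB_shift[OF Np Nsb psi] ge le P by simp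
  then show ?thesis using hol unfolding equilibrium_state_def by blast
qed

lemma subgradient:
  fixes \<psi> h :: "'a \<Rightarrow> real"
  assumes psi: "\<psi> \<in> posC" and eq: "equilibrium_state \<mu> \<tau> \<psi> N1" and hc: "continuous_on UNIV h"
  shows "real_of_ereal (pressure \<mu> \<tau> (\<lambda>x. exp (ln (\<psi> x) + t * h x))) \<ge>
         real_of_ereal (pressure \<mu> \<tau> \<psi>) + t * (\<integral>x. h x \<partial>Phi N1)"
proof -
  have hol: "holonomic \<tau> N1" and eqs: "entropy_v \<mu> \<tau> N1 + ereal (\<integral>x. ln (\<psi> x) \<partial>Phi N1) = pressure \<mu> \<tau> \<psi>"
    using eq unfolding equilibrium_state_def by auto
  have N1: "prob_space N1" "sets N1 = sets borel" using hol by (auto simp: holonomic_def)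
  have nu: "prob_space (Phi N1)" "sets (Phi N1) = sets borel" using Phi_prob[OF N1] by auto
  have fin: "finite_measure (Phi N1)" using nu(1) by (rule prob_space.finite_measure)
  have pc: "continuous_on UNIV \<psi>" "\<And>x. \<psi> x > 0" using psi by (auto simp: posC_def)
  have lnpc: "continuous_on UNIV (\<lambda>x. ln (\<psi> x))" using pc by (intro continuous_intros) (auto simp: less_imp_neq[symmetric])
  define \<psi>t where "\<psi>t x = exp (ln (\<psi> x) + t * h x)" for x
  have pt: "\<psi>t \<in> posC" unfolding posC_def \<psi>t_def using lnpc hc by (auto intro!: continuous_intros)
  define p where "p = real_of_ereal (pressure \<mu> \<tau> \<psi>)"
  have P: "pressure \<mu> \<tau> \<psi> = ereal p" unfolding p_def by (rule pressure_finite[OF psi])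
  define a where "a = (\<integral>x. ln (\<psi> x) \<partial>Phi N1)"
  define b where "b = (\<integral>x. h x \<partial>Phi N1)"
  obtain e where e: "entropy_v \<mu> \<tau> N1 = ereal e" using eqs P unfolding a_def by (cases "entropy_v \<mu> \<tau> N1") auto
  have ep: "e + a = p" using eqs P e unfolding a_def by simp
  have "(\<integral>x. ln (\<psi>t x) \<partial>Phi N1) = (\<integral>x. ln (\<psi> x) + t * h x \<partial>Phi N1)" unfolding \<psi>t_def by simp
  also have "\<dots> = a + t * b" unfolding a_def b_def
    using cont_integrable[OF cX lnpc fin nu(2)] cont_integrable[OF cX hc fin nu(2)] by simp
  finally have lt: "(\<integral>x. ln (\<psi>t x) \<partial>Phi N1) = a + t * b" .
  have "ereal (p + t * b) = infB \<mu> \<tau> \<psi>t N1" using infB_shift[OF N1 pt] e lt ep by simp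
  also have "\<dots> \<le> pressure \<mu> \<tau> \<psi>t" unfolding pressure_def using hol by (intro SUP_upper) auto
  also have "\<dots> = ereal (real_of_ereal (pressure \<mu> \<tau> \<psi>t))" by (rule pressure_finite[OF pt])
  finally have "p + t * b \<le> real_of_ereal (pressure \<mu> \<tau> \<psi>t)" by simp
  then show ?thesis unfolding p_def b_def \<psi>t_def .
qed

lemma uniqueness:
  fixes \<psi> :: "'a \<Rightarrow> real"
  assumes psi: "\<psi> \<in> posC"
    and gd: "gateaux_differentiable_C (\<lambda>\<phi>. real_of_ereal (pressure \<mu> \<tau> (\<lambda>x. exp (\<phi> x)))) (\<lambda>x. ln (\<psi> x))"
    and e1: "equilibrium_state \<mu> \<tau> \<psi> N1" and e2: "equilibrium_state \<mu> \<tau> \<psi> N2"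
  shows "Phi N1 = Phi N2"
proof -
  define pp where "pp = (\<lambda>\<phi>::'a \<Rightarrow> real. real_of_ereal (pressure \<mu> \<tau> (\<lambda>x. exp (\<phi> x))))"
  obtain L :: "('a \<Rightarrow> real) \<Rightarrow> real" where L: "\<And>h. continuous_on UNIV h \<Longrightarrow>
      ((\<lambda>t. (pp (\<lambda>x. ln (\<psi> x) + t * h x) - pp (\<lambda>x. ln (\<psi> x))) / t) \<longlongrightarrow> L h) (at 0)"
    using gd unfolding gateaux_differentiable_C_def pp_def by blast
  have pc: "\<And>x. \<psi> x > 0" using psi by (auto simp: posC_def)
  have pp0: "pp (\<lambda>x. ln (\<psi> x)) = real_of_ereal (pressure \<mu> \<tau> \<psi>)"
  proof -
    have "(\<lambda>x. exp (ln (\<psi> x))) = \<psi>" using pc by auto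
    then show ?thesis unfolding pp_def by simp
  qed
  have key: "(\<integral>x. h x \<partial>Phi N) = L h" if eqN: "equilibrium_state \<mu> \<tau> \<psi> N" and hc: "continuous_on UNIV h" for N h
  proof -
    define D where "D t = (pp (\<lambda>x. ln (\<psi> x) + t * h x) - pp (\<lambda>x. ln (\<psi> x))) / t" for t
    have sg: "pp (\<lambda>x. ln (\<psi> x) + t * h x) - pp (\<lambda>x. ln (\<psi> x)) \<ge> t * (\<integral>x. h x \<partial>Phi N)" for t
      using subgradient[OF psi eqN hc, of t] pp0 unfolding pp_def by simp
    have lim: "(D \<longlongrightarrow> L h) (at 0)" using L[OF hc] unfolding D_def .
    have lr: "(D \<longlongrightarrow> L h) (at_right 0)" and ll: "(D \<longlongrightarrow> L h) (at_left 0)"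
      using lim filterlim_at_split by blast+
    have "(\<integral>x. h x \<partial>Phi N) \<le> L h"
    proof (rule tendsto_lowerbound[OF lr _ trivial_limit_at_right_real])
      show "\<forall>\<^sub>F t in at_right 0. (\<integral>x. h x \<partial>Phi N) \<le> D t"
      proof (rule eventually_at_rightI[where b=1])
        fix t :: real assume "t \<in> {0<..<1}"
        then have t: "t > 0" by simp
        show "(\<integral>x. h x \<partial>Phi N) \<le> D t" unfolding D_def using sg[of t] t by (simp add: pos_le_divide_eq mult.commute)
      qed simp
    qed
    moreover have "L h \<le> (\<integral>x. h x \<partial>Phi N)"
    proof (rule tendsto_upperbound[OF ll _ trivial_limit_at_left_real])
      show "\<forall>\<^sub>F t in at_left 0. D t \<le> (\<integral>x. h x \<partial>Phi N)"
      proof (rule eventually_at_leftI[where a="-1"])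
        fix t :: real assume "t \<in> {-1<..<0}"
        then have t: "t < 0" by simp
        show "D t \<le> (\<integral>x. h x \<partial>Phi N)" unfolding D_def using sg[of t] t by (simp add: neg_divide_le_eq mult.commute)
      qed simp
    qed
    ultimately show ?thesis by simp
  qed
  have N1: "prob_space N1" "sets N1 = sets borel" and N2: "prob_space N2" "sets N2 = sets borel"
    using e1 e2 by (auto simp: equilibrium_state_def holonomic_def)
  show ?thesis
  proof (rule measure_eq_cont)
    show "finite_measure (Phi N1)" "finite_measure (Phi N2)"
      using Phi_prob[OF N1] Phi_prob[OF N2] prob_space.finite_measure by auto
    show "sets (Phi N1) = sets borel" "sets (Phi N2) = sets borel" using Phi_prob[OF N1] Phi_prob[OF N2] by auto
    fix f :: "'a \<Rightarrow> real" assume "continuous_on UNIV f"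
    then show "(\<integral>x. f x \<partial>Phi N1) = (\<integral>x. f x \<partial>Phi N2)" using key[OF e1] key[OF e2] by simp
  qed
qed

end

theorem mainTheorem8:
  fixes \<tau> :: "'b::metric_space \<Rightarrow> 'a::metric_space \<Rightarrow> 'a"
    and \<mu> :: "'b measure" and \<psi> :: "'a \<Rightarrow> real"
  assumes "compact (UNIV :: 'a set)" and "compact (UNIV :: 'b set)"
    and "continuous_on UNIV (\<lambda>(\<theta>, x). \<tau> \<theta> x)"
    and "prob_space \<mu>" and "sets \<mu> = sets borel"
    and "continuous_on UNIV \<psi>" and "\<forall>x. \<psi> x > 0"
    and "gateaux_differentiable_C (\<lambda>\<phi>. real_of_ereal (pressure \<mu> \<tau> (\<lambda>x. exp (\<phi> x)))) (\<lambda>x. ln (\<psi> x))"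
  shows "card {Phi N | N. equilibrium_state \<mu> \<tau> \<psi> N} = 1"
proof -
  interpret sys \<tau> \<mu> by (rule sys.intro) (rule assms)+
  have psi: "\<psi> \<in> posC" using assms(6,7) by (simp add: posC_def)
  obtain N0 where N0: "equilibrium_state \<mu> \<tau> \<psi> N0" using existence[OF psi] by blast
  have "{Phi N | N. equilibrium_state \<mu> \<tau> \<psi> N} = {Phi N0}"
    using uniqueness[OF psi assms(8) _ N0] N0 by blast
  then show ?thesis by simp
qed


end
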